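(* For every $m\ge1$, each of the sequences $\big(\#\Pi_n(1/2/\ldots/m)\big)_{n\ge0}$, $\big(\#\Pi_n(12\ldots m)\big)_{n\ge0}$ and $\big(\#\Pi_n(12/3/4/\ldots/m)\big)_{n\ge0}$ (the last for $m\ge2$) is P-recursive. Furthermore, for every partition $\pi$ of $[3]$, the sequence $\big(\#\Pi_n(\pi)\big)_{n\ge0}$ is P-recursive.
   Context: $\Pi_n$ is the set of partitions of $[n]=\{1,\ldots,n\}$, written with slashes between blocks. Standardization $\mathrm{st}$ is the order-preserving bijection of a finite integer set onto $[\#S]$. A subpartition of $\sigma$ is a partition each of whose blocks lies in a different block of $\sigma$; $\sigma$ contains $\pi$ if some subpartition $\sigma'$ has $\mathrm{st}(\sigma')=\pi$, else avoids $\pi$; $\Pi_n(\pi)$ is the set of $\sigma\in\Pi_n$ avoiding $\pi$. $1/2/\ldots/m$ is the all-singletons partition of $[m]$, $12\ldots m$ the one-block partition, $12/3/\ldots/m$ has blocks $\{1,2\},\{3\},\ldots,\{m\}$. A sequence $(a_n)$ is P-recursive if there are polynomials $P_0,\ldots,P_k$, not all zero, with $\sum_{i=0}^kP_i(n)a_{n+i}=0$ for all $n\ge0$. *)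

theory Defs
  imports "HOL-Library.Disjoint_Sets" "HOL-Computational_Algebra.Polynomial"
begin

definition set_partitions :: "nat \<Rightarrow> nat set set set" where
  "set_partitions n = {P. partition_on {1..n} P}"

text \<open>Order-preserving bijection of a finite set S of naturals onto {1..card S}.\<close>
definition st_map :: "nat set \<Rightarrow> nat \<Rightarrow> nat" where
  "st_map S x = card {y \<in> S. y < x} + 1"

definition st :: "nat set set \<Rightarrow> nat set set" where
  "st \<tau> = (\<lambda>B. st_map (\<Union>\<tau>) ` B) ` \<tau>"

definition subpartition :: "nat set set \<Rightarrow> nat set set \<Rightarrow> bool" where
  "subpartition \<tau> \<sigma> \<longleftrightarrow> partition_on (\<Union>\<tau>) \<tau> \<and>
     (\<exists>f. (\<forall>B\<in>\<tau>. f B \<in> \<sigma> \<and> B \<subseteq> f B) \<and> inj_on f \<tau>)"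

definition contains :: "nat set set \<Rightarrow> nat set set \<Rightarrow> bool" where
  "contains \<sigma> \<pi> \<longleftrightarrow> (\<exists>\<tau>. subpartition \<tau> \<sigma> \<and> st \<tau> = \<pi>)"

definition avoiders :: "nat \<Rightarrow> nat set set \<Rightarrow> nat set set set" where
  "avoiders n \<pi> = {\<sigma> \<in> set_partitions n. \<not> contains \<sigma> \<pi>}"

definition singletons_part :: "nat \<Rightarrow> nat set set" where
  "singletons_part m = (\<lambda>i. {i}) ` {1..m}"

definition oneblock_part :: "nat \<Rightarrow> nat set set" where
  "oneblock_part m = {{1..m}}"

definition pair_singletons_part :: "nat \<Rightarrow> nat set set" where
  "pair_singletons_part m = insert {1, 2} ((\<lambda>i. {i}) ` {3..m})"

definition P_recursive :: "(nat \<Rightarrow> real) \<Rightarrow> bool" where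
  "P_recursive a \<longleftrightarrow> (\<exists>(k::nat) (P :: nat \<Rightarrow> real poly).
      (\<exists>i\<le>k. P i \<noteq> 0) \<and>
      (\<forall>n. (\<Sum>i\<le>k. poly (P i) (real n) * a (n + i)) = 0))"

end

theory Submission
  imports Defs
begin

definition app :: "real poly \<Rightarrow> (nat \<Rightarrow> real) \<Rightarrow> nat \<Rightarrow> real" where
  "app Q a n = (\<Sum>i\<le>degree Q. coeff Q i * a (n + i))"

lemma app_bound:
  assumes "degree Q \<le> D"
  shows "app Q a n = (\<Sum>i\<le>D. coeff Q i * a (n + i))"
proof -
  have "(\<Sum>i\<le>D. coeff Q i * a (n + i)) = (\<Sum>i\<le>degree Q. coeff Q i * a (n + i))"
    using assms by (intro sum.mono_neutral_right) (auto simp: coeff_eq_0)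
  then show ?thesis by (simp add: app_def)
qed

lemma app_add: "app (P + Q) a n = app P a n + app Q a n"
proof -
  let ?D = "max (degree P) (degree Q)"
  have "degree (P + Q) \<le> ?D" by (rule degree_add_le) auto
  then show ?thesis
    by (simp add: app_bound[of _ ?D] algebra_simps sum.distrib)
qed

lemma app_smult: "app (smult c P) a n = c * app P a n"
  by (simp add: app_bound[of "smult c P" "degree P"] app_def sum_distrib_left mult.assoc)

lemma app_pCons: "app (pCons c Q) a n = c * a n + app Q a (Suc n)"
proof -
  have "app (pCons c Q) a n = (\<Sum>i\<le>Suc (degree Q). coeff (pCons c Q) i * a (n + i))"
    by (rule app_bound) (simp add: degree_pCons_le)
  also have "\<dots> = c * a n + (\<Sum>i\<le>degree Q. coeff Q i * a (Suc n + i))"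
    by (subst sum.atMost_Suc_shift) simp
  finally show ?thesis by (simp add: app_def)
qed

lemma app_0[simp]: "app 0 a n = 0" by (simp add: app_def)

lemma app_mult: "app (P * Q) a n = app P (app Q a) n"
proof (induction P arbitrary: n)
  case 0 then show ?case by simp
next
  case (pCons c P)
  have "pCons c P * Q = smult c Q + pCons 0 (P * Q)" by simp
  then have "app (pCons c P * Q) a n = c * app Q a n + app (P * Q) a (Suc n)"
    by (simp add: app_add app_smult app_pCons)
  then show ?case by (simp add: pCons.IH app_pCons)
qed

lemma app_lin: "app Q (\<lambda>n. a n + b n) n = app Q a n + app Q b n"
  by (simp add: app_def algebra_simps sum.distrib)

lemma app_scal: "app Q (\<lambda>n. c * a n) n = c * app Q a n"
  by (simp add: app_def sum_distrib_left algebra_simps)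

lemma app_shift: "app Q (\<lambda>n. a (Suc n)) n = app Q a (Suc n)"
  by (simp add: app_def)

definition cfin :: "(nat \<Rightarrow> real) \<Rightarrow> bool" where
  "cfin a \<longleftrightarrow> (\<exists>Q. Q \<noteq> 0 \<and> (\<forall>n. app Q a n = 0))"

lemma cfin_add: assumes "cfin a" "cfin b" shows "cfin (\<lambda>n. a n + b n)"
proof -
  obtain P where P: "P \<noteq> 0" "\<And>n. app P a n = 0" using assms(1) by (auto simp: cfin_def)
  obtain Q where Q: "Q \<noteq> 0" "\<And>n. app Q b n = 0" using assms(2) by (auto simp: cfin_def)
  have "app (P * Q) (\<lambda>n. a n + b n) n = 0" for n
  proof -
    have "app (P * Q) (\<lambda>n. a n + b n) n = app (P*Q) a n + app (P*Q) b n" by (rule app_lin)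
    also have "app (P*Q) a n = app (Q*P) a n" by (simp add: mult.commute)
    also have "\<dots> = app Q (app P a) n" by (rule app_mult)
    also have "\<dots> = 0" using P by (simp add: app_def)
    also have "app (P*Q) b n = app P (app Q b) n" by (simp add: app_mult)
    also have "\<dots> = 0" using Q by (simp add: app_def)
    finally show ?thesis by simp
  qed
  then show ?thesis unfolding cfin_def using P Q by (intro exI[of _ "P*Q"]) simp
qed

lemma cfin_scal: assumes "cfin a" shows "cfin (\<lambda>n. c * a n)"
  using assms by (auto simp: cfin_def app_scal)

lemma cfin_zero: "cfin (\<lambda>n. 0)"
  unfolding cfin_def by (rule exI[of _ 1]) (simp add: app_def)

lemma cfin_sum: assumes "\<And>c. c \<in> A \<Longrightarrow> cfin (f c)" shows "cfin (\<lambda>n. \<Sum>c\<in>A. f c n)"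
proof (cases "finite A")
  case True
  then show ?thesis using assms
    by (induction A rule: finite_induct) (auto intro: cfin_add cfin_zero)
next
  case False then show ?thesis by (simp add: cfin_zero)
qed

lemma cfin_solve:
  assumes "cfin g" "\<And>n. b (Suc n) = l * b n + g n"
  shows "cfin b"
proof -
  obtain Q where Q: "Q \<noteq> 0" "\<And>n. app Q g n = 0" using assms(1) by (auto simp: cfin_def)
  have e: "app [:-l, 1:] b n = g n" for n
    using assms(2)[of n] by (simp add: app_pCons)
  have e': "app [:-l,1:] b = g" by (rule ext, rule e)
  have "app (Q * [:-l,1:]) b n = 0" for n
    unfolding app_mult e' using Q(2) by simp
  moreover have "[:-l,1:] \<noteq> (0::real poly)" by simp
  then have "Q * [:-l,1:] \<noteq> 0" using Q(1) by (metis mult_eq_0_iff)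
  ultimately show ?thesis unfolding cfin_def by blast
qed

lemma cfin_P_recursive: assumes "cfin a" shows "P_recursive a"
proof -
  obtain Q where Q: "Q \<noteq> 0" "\<And>n. app Q a n = 0" using assms by (auto simp: cfin_def)
  show ?thesis unfolding P_recursive_def
    apply (rule exI[of _ "degree Q"], rule exI[of _ "\<lambda>i. [:coeff Q i:]"])
  proof (intro conjI)
    show "\<exists>i\<le>degree Q. [:coeff Q i:] \<noteq> 0" using Q by (intro exI[of _ "degree Q"]) auto
    show "\<forall>n. (\<Sum>i\<le>degree Q. poly [:coeff Q i:] (real n) * a (n + i)) = 0"
      using Q(2) by (simp add: app_def)
  qed
qed

definition ffact :: "nat \<Rightarrow> nat \<Rightarrow> real" where
  "ffact u i = (\<Prod>j<i. real u - real j)"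

lemma ffact_0[simp]: "ffact u 0 = 1" by (simp add: ffact_def)

lemma ffact_Suc_right: "ffact u (Suc i) = ffact u i * (real u - real i)"
  by (simp add: ffact_def)

lemma ffact_Suc_left: "ffact u (Suc i) = real u * ffact (u - 1) i"
proof (cases u)
  case 0 then show ?thesis by (auto simp: ffact_def prod.lessThan_Suc_shift)
next
  case (Suc v)
  have "ffact (Suc v) (Suc i) = (real (Suc v) - real 0) * (\<Prod>j<i. real (Suc v) - real (Suc j))"
    unfolding ffact_def by (rule prod.lessThan_Suc_shift)
  also have "(\<Prod>j<i. real (Suc v) - real (Suc j)) = ffact v i" unfolding ffact_def by simp
  finally show ?thesis using Suc by simp
qed

lemma cfin_ffact: "cfin (\<lambda>n. ffact n i)"
proof (induction i)
  case 0
  show ?case by (rule cfin_solve[of "\<lambda>n. 0" _ 1]) (auto simp: cfin_zero)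
next
  case (Suc i)
  show ?case
  proof (rule cfin_solve[of "\<lambda>n. real (Suc i) * ffact n i" _ 1])
    show "cfin (\<lambda>n. real (Suc i) * ffact n i)" by (rule cfin_scal[OF Suc])
    fix n
    have "ffact (Suc n) (Suc i) = real (Suc n) * ffact n i"
      by (subst ffact_Suc_left) simp
    then show "ffact (Suc n) (Suc i) = 1 * ffact n (Suc i) + real (Suc i) * ffact n i"
      by (simp add: ffact_Suc_right algebra_simps)
  qed
qed

lemma st_map_mono:
  assumes "finite S" "x \<in> S" "y \<in> S" "x < y"
  shows "st_map S x < st_map S y"
proof -
  have "{z\<in>S. z < x} \<subset> {z\<in>S. z < y}" using assms by auto
  then have "card {z\<in>S. z < x} < card {z\<in>S. z < y}"
    using assms(1) by (intro psubset_card_mono) auto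
  then show ?thesis by (simp add: st_map_def)
qed

lemma st_map_less_iff:
  assumes "finite S" "x \<in> S" "y \<in> S"
  shows "st_map S x < st_map S y \<longleftrightarrow> x < y"
  using st_map_mono[OF assms] st_map_mono[OF assms(1,3,2)]
  by (metis less_asym' linorder_neqE_nat)

lemma st_map_inj: assumes "finite S" shows "inj_on (st_map S) S"
  unfolding inj_on_def using st_map_mono[OF assms]
  by (metis less_irrefl linorder_neqE_nat)

lemma st_map_image: assumes "finite S" shows "st_map S ` S = {1..card S}"
proof -
  have sub: "st_map S ` S \<subseteq> {1..card S}"
  proof
    fix v assume "v \<in> st_map S ` S"
    then obtain x where x: "x \<in> S" "v = st_map S x" by auto
    have "{z\<in>S. z < x} \<subset> S" using x by auto
    then have "card {z\<in>S. z < x} < card S" using assms by (intro psubset_card_mono) auto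
    then show "v \<in> {1..card S}" using x by (simp add: st_map_def)
  qed
  have "card (st_map S ` S) = card S" using st_map_inj[OF assms] by (rule card_image)
  then show ?thesis using sub by (intro card_subset_eq) auto
qed

lemma st_map_ge1: "st_map S x \<ge> 1" by (simp add: st_map_def)

lemma Union_st: "\<Union>(st \<tau>) = st_map (\<Union>\<tau>) ` (\<Union>\<tau>)"
  by (auto simp: st_def)

lemma set_partitions_finite_blocks:
  assumes "\<sigma> \<in> set_partitions n"
  shows "\<Union>\<sigma> = {1..n}" "\<And>B. B \<in> \<sigma> \<Longrightarrow> B \<subseteq> {1..n}" "\<And>B. B \<in> \<sigma> \<Longrightarrow> finite B"
    "{} \<notin> \<sigma>" "\<And>A B x. A \<in> \<sigma> \<Longrightarrow> B \<in> \<sigma> \<Longrightarrow> x \<in> A \<Longrightarrow> x \<in> B \<Longrightarrow> A = B"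
  using assms unfolding set_partitions_def
  by (auto simp: partition_on_def finite_elements disjoint_def intro: finite_subset)

lemma set_partitions_finite: "\<sigma> \<in> set_partitions n \<Longrightarrow> finite \<sigma>"
proof -
  assume a: "\<sigma> \<in> set_partitions n"
  have "finite (\<Union>\<sigma>)" using set_partitions_finite_blocks(1)[OF a] by simp
  then show "finite \<sigma>" by (rule finite_UnionD)
qed

lemma subpartition_props:
  assumes "subpartition \<tau> \<sigma>" "\<sigma> \<in> set_partitions n"
  shows "\<Union>\<tau> \<subseteq> {1..n}" "finite (\<Union>\<tau>)" "finite \<tau>" "{} \<notin> \<tau>"
    "\<And>A B x. A \<in> \<tau> \<Longrightarrow> B \<in> \<tau> \<Longrightarrow> x \<in> A \<Longrightarrow> x \<in> B \<Longrightarrow> A = B"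
proof -
  obtain f where f: "\<forall>B\<in>\<tau>. f B \<in> \<sigma> \<and> B \<subseteq> f B" "inj_on f \<tau>"
    using assms(1) by (auto simp: subpartition_def)
  show 1: "\<Union>\<tau> \<subseteq> {1..n}"
  proof (rule Union_least)
    fix T assume "T \<in> \<tau>"
    then have "T \<subseteq> f T" "f T \<in> \<sigma>" using f by auto
    then show "T \<subseteq> {1..n}" using set_partitions_finite_blocks(2)[OF assms(2)] by (meson subset_trans)
  qed
  show 2: "finite (\<Union>\<tau>)" using 1 finite_subset by blast
  show "finite \<tau>" using 2 by (rule finite_UnionD)
  show "{} \<notin> \<tau>" using assms(1) by (auto simp: subpartition_def partition_on_def)
  show "\<And>A B x. A \<in> \<tau> \<Longrightarrow> B \<in> \<tau> \<Longrightarrow> x \<in> A \<Longrightarrow> x \<in> B \<Longrightarrow> A = B"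
    using assms(1) by (auto simp: subpartition_def partition_on_def disjoint_def)
qed

lemma st_inj_blocks:
  assumes "finite (\<Union>\<tau>)"
  shows "inj_on ((`) (st_map (\<Union>\<tau>))) \<tau>"
proof (rule inj_onI)
  fix A B assume "A \<in> \<tau>" "B \<in> \<tau>" "st_map (\<Union>\<tau>) ` A = st_map (\<Union>\<tau>) ` B"
  then show "A = B" using inj_on_image_eq_iff[OF st_map_inj[OF assms]] by blast
qed

lemma card_st: assumes "finite (\<Union>\<tau>)" shows "card (st \<tau>) = card \<tau>"
  unfolding st_def using st_inj_blocks[OF assms] by (rule card_image)

lemma subpartition_intro:
  assumes "partition_on (\<Union>\<tau>) \<tau>"
    "\<And>T. T \<in> \<tau> \<Longrightarrow> \<exists>D\<in>\<sigma>. T \<subseteq> D"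
    "\<And>T1 T2 D. T1 \<in> \<tau> \<Longrightarrow> T2 \<in> \<tau> \<Longrightarrow> D \<in> \<sigma> \<Longrightarrow> T1 \<subseteq> D \<Longrightarrow> T2 \<subseteq> D \<Longrightarrow> T1 = T2"
  shows "subpartition \<tau> \<sigma>"
  unfolding subpartition_def
proof (intro conjI exI[of _ "\<lambda>T. SOME D. D \<in> \<sigma> \<and> T \<subseteq> D"])
  show "partition_on (\<Union>\<tau>) \<tau>" by fact
  show "\<forall>B\<in>\<tau>. (SOME D. D \<in> \<sigma> \<and> B \<subseteq> D) \<in> \<sigma> \<and> B \<subseteq> (SOME D. D \<in> \<sigma> \<and> B \<subseteq> D)"
    using assms(2) by (metis (mono_tags, lifting) someI_ex)
  show "inj_on (\<lambda>T. SOME D. D \<in> \<sigma> \<and> T \<subseteq> D) \<tau>"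
  proof (rule inj_onI)
    fix T1 T2 assume T: "T1 \<in> \<tau>" "T2 \<in> \<tau>" and eq: "(SOME D. D \<in> \<sigma> \<and> T1 \<subseteq> D) = (SOME D. D \<in> \<sigma> \<and> T2 \<subseteq> D)"
    have "(SOME D. D \<in> \<sigma> \<and> T1 \<subseteq> D) \<in> \<sigma> \<and> T1 \<subseteq> (SOME D. D \<in> \<sigma> \<and> T1 \<subseteq> D)"
      using assms(2)[OF T(1)] by (metis (mono_tags, lifting) someI_ex)
    moreover have "(SOME D. D \<in> \<sigma> \<and> T2 \<subseteq> D) \<in> \<sigma> \<and> T2 \<subseteq> (SOME D. D \<in> \<sigma> \<and> T2 \<subseteq> D)"
      using assms(2)[OF T(2)] by (metis (mono_tags, lifting) someI_ex)
    ultimately show "T1 = T2" using assms(3)[OF T] eq by metis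
  qed
qed

definition E0 :: "nat \<Rightarrow> nat set set \<Rightarrow> nat set set" where
  "E0 n \<sigma> = insert {Suc n} \<sigma>"
definition EC :: "nat \<Rightarrow> nat set set \<Rightarrow> nat set \<Rightarrow> nat set set" where
  "EC n \<sigma> C = insert (insert (Suc n) C) (\<sigma> - {C})"
definition res :: "nat \<Rightarrow> nat set set \<Rightarrow> nat set set" where
  "res n \<rho> = (\<inter>) {1..n} ` \<rho> - {{}}"

lemma sp_iff: "\<sigma> \<in> set_partitions n \<longleftrightarrow> \<Union>\<sigma> = {1..n} \<and> (\<forall>A\<in>\<sigma>. \<forall>B\<in>\<sigma>. A \<noteq> B \<longrightarrow> A \<inter> B = {}) \<and> {} \<notin> \<sigma>"
  by (simp add: set_partitions_def partition_on_def disjoint_def)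

lemma sp_sub: assumes "\<sigma> \<in> set_partitions n" "B \<in> \<sigma>" shows "B \<subseteq> {1..n}"
proof -
  have "\<Union>\<sigma> = {1..n}" using assms by (simp add: sp_iff)
  moreover have "B \<subseteq> \<Union>\<sigma>" using assms(2) by (rule Union_upper)
  ultimately show ?thesis by simp
qed

lemma finite_set_partitions: "finite (set_partitions n)"
proof -
  have "set_partitions n \<subseteq> Pow (Pow {1..n})" using sp_sub by blast
  then show ?thesis by (rule finite_subset) simp
qed


lemma E0_part: assumes "\<sigma> \<in> set_partitions n" shows "E0 n \<sigma> \<in> set_partitions (Suc n)"
proof -
  have "Suc n \<notin> B" if "B \<in> \<sigma>" for B using sp_sub[OF assms that] by auto
  then show ?thesis using assms unfolding sp_iff E0_def by (auto simp: atLeastAtMostSuc_conv)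
qed

lemma EC_part: assumes "\<sigma> \<in> set_partitions n" "C \<in> \<sigma>" shows "EC n \<sigma> C \<in> set_partitions (Suc n)"
proof -
  have "Suc n \<notin> B" if "B \<in> \<sigma>" for B using sp_sub[OF assms(1) that] by auto
  then show ?thesis using assms unfolding sp_iff EC_def
    by (auto simp: atLeastAtMostSuc_conv) blast+
qed

lemma res_E0: assumes "\<sigma> \<in> set_partitions n" shows "res n (E0 n \<sigma>) = \<sigma>"
proof -
  have e: "\<And>B. B \<in> \<sigma> \<Longrightarrow> {1..n} \<inter> B = B" using sp_sub[OF assms] by blast
  have "(\<inter>) {1..n} ` \<sigma> = (\<lambda>B. B) ` \<sigma>" by (rule image_cong[OF refl]) (use e in blast)
  then have "(\<inter>) {1..n} ` \<sigma> = \<sigma>" by simp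
  moreover have "{} \<notin> \<sigma>" using assms by (simp add: sp_iff)
  ultimately show ?thesis by (auto simp: res_def E0_def)
qed

lemma res_EC: assumes "\<sigma> \<in> set_partitions n" "C \<in> \<sigma>" shows "res n (EC n \<sigma> C) = \<sigma>"
proof -
  have s: "{1..n} \<inter> B = B" if "B \<in> \<sigma>" for B using sp_sub[OF assms(1) that] by auto
  have "(\<inter>) {1..n} ` (\<sigma> - {C}) = (\<lambda>B. B) ` (\<sigma> - {C})" by (rule image_cong[OF refl]) (use s in blast)
  then have "(\<inter>) {1..n} ` (\<sigma> - {C}) = \<sigma> - {C}" by simp
  moreover have "{1..n} \<inter> insert (Suc n) C = C" using s[OF assms(2)] by auto
  moreover have "{} \<notin> \<sigma>" using assms by (simp add: sp_iff)
  ultimately show ?thesis using assms(2) by (auto simp: res_def EC_def)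
qed

lemma E0_ne_EC: assumes "\<sigma> \<in> set_partitions n" "C \<in> \<sigma>" shows "E0 n \<sigma> \<noteq> EC n \<sigma> C"
proof
  assume eq: "E0 n \<sigma> = EC n \<sigma> C"
  have "C \<noteq> {}" using assms by (auto simp: sp_iff)
  have "Suc n \<notin> B" if "B \<in> \<sigma>" for B using sp_sub[OF assms(1) that] by auto
  moreover have "{Suc n} \<in> EC n \<sigma> C" by (metis E0_def insertI1 eq)
  ultimately have "{Suc n} = insert (Suc n) C" using assms(2) by (auto simp: EC_def)
  then have "C \<subseteq> {Suc n}" by auto
  then have "Suc n \<in> C" using \<open>C \<noteq> {}\<close> by auto
  then show False using \<open>\<And>B. B \<in> \<sigma> \<Longrightarrow> Suc n \<notin> B\<close> assms(2) by blast
qed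

lemma EC_inj: assumes "\<sigma> \<in> set_partitions n" shows "inj_on (EC n \<sigma>) \<sigma>"
proof (rule inj_onI)
  fix C D assume CD: "C \<in> \<sigma>" "D \<in> \<sigma>" "EC n \<sigma> C = EC n \<sigma> D"
  have nin: "Suc n \<notin> B" if "B \<in> \<sigma>" for B using sp_sub[OF assms that] by auto
  have "insert (Suc n) C \<in> EC n \<sigma> C" by (simp add: EC_def)
  then have "insert (Suc n) C \<in> EC n \<sigma> D" using CD(3) by simp
  then have "insert (Suc n) C = insert (Suc n) D \<or> insert (Suc n) C \<in> \<sigma>" by (auto simp: EC_def)
  moreover have "insert (Suc n) C \<notin> \<sigma>" using nin by blast
  ultimately have "insert (Suc n) C = insert (Suc n) D" by blast
  then show "C = D" using nin CD by (metis insert_ident)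
qed

lemma res_surj:
  assumes "\<rho> \<in> set_partitions (Suc n)"
  shows "res n \<rho> \<in> set_partitions n \<and> (\<rho> = E0 n (res n \<rho>) \<or> (\<exists>C\<in>res n \<rho>. \<rho> = EC n (res n \<rho>) C))"
proof -
  have p: "partition_on {1..Suc n} \<rho>" using assms by (simp add: set_partitions_def)
  have "partition_on ({1..n} \<inter> {1..Suc n}) ((\<inter>) {1..n} ` \<rho> - {{}})"
    by (rule partition_on_restrict[OF p])
  moreover have "{1..n} \<inter> {1..Suc n} = {1..n}" by auto
  ultimately have r: "res n \<rho> \<in> set_partitions n" by (simp add: res_def set_partitions_def)
  have ax: "\<Union>\<rho> = {1..Suc n}" "\<And>A B. A \<in> \<rho> \<Longrightarrow> B \<in> \<rho> \<Longrightarrow> A \<noteq> B \<Longrightarrow> A \<inter> B = {}" "{} \<notin> \<rho>"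
    using assms by (auto simp: sp_iff)
  have "Suc n \<in> \<Union>\<rho>" using ax(1) by simp
  then obtain R where R: "R \<in> \<rho>" "Suc n \<in> R" by blast
  have other: "{1..n} \<inter> B = B" "Suc n \<notin> B" if "B \<in> \<rho>" "B \<noteq> R" for B
  proof -
    have "B \<subseteq> {1..Suc n}" using ax(1) that by auto
    moreover have "Suc n \<notin> B" using ax(2)[OF that(1) R(1) that(2)] R(2) by auto
    ultimately show "{1..n} \<inter> B = B" "Suc n \<notin> B" by (auto simp: atLeastAtMostSuc_conv)
  qed
  have Rsub: "R \<subseteq> {1..Suc n}" using ax(1) R by auto
  have rest: "(\<inter>) {1..n} ` (\<rho> - {R}) = \<rho> - {R}"
  proof -
    have "(\<inter>) {1..n} ` (\<rho> - {R}) = (\<lambda>B. B) ` (\<rho> - {R})" by (rule image_cong[OF refl]) (use other in blast)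
    then show ?thesis by simp
  qed
  have rho: "\<rho> = insert R (\<rho> - {R})" using R by blast
  have img: "(\<inter>) {1..n} ` \<rho> = insert ({1..n} \<inter> R) (\<rho> - {R})"
    by (subst rho) (simp only: image_insert rest)
  show ?thesis
  proof (cases "R = {Suc n}")
    case True
    have "res n \<rho> = \<rho> - {R}"
    proof -
      have "(\<inter>) {1..n} ` \<rho> = insert {} (\<rho> - {R})"
        using img True by auto
      then show ?thesis using ax(3) by (auto simp: res_def)
    qed
    then have "\<rho> = E0 n (res n \<rho>)" using R True by (auto simp: E0_def)
    then show ?thesis using r by simp
  next
    case False
    define C where "C = {1..n} \<inter> R"
    have RC: "R = insert (Suc n) C" using Rsub R(2) by (auto simp: C_def atLeastAtMostSuc_conv)
    have Cne: "C \<noteq> {}" using False RC by auto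
    have Cnot: "C \<notin> \<rho> - {R}"
    proof
      assume "C \<in> \<rho> - {R}"
      then have "C \<inter> R = {}" using ax(2)[of C R] R by auto
      then show False using Cne by (auto simp: C_def)
    qed
    have "(\<inter>) {1..n} ` \<rho> = insert C (\<rho> - {R})"
      using img by (simp add: C_def)
    then have rr: "res n \<rho> = insert C (\<rho> - {R})" using ax(3) Cne by (auto simp: res_def)
    have "EC n (res n \<rho>) C = \<rho>"
      unfolding EC_def rr using Cnot RC R by auto
    then show ?thesis using r rr by auto
  qed
qed

definition ext :: "nat \<Rightarrow> nat set set \<Rightarrow> nat set set set" where
  "ext n \<sigma> = insert (E0 n \<sigma>) (EC n \<sigma> ` \<sigma>)"

lemma sp_Suc_Union: "set_partitions (Suc n) = (\<Union>\<sigma>\<in>set_partitions n. ext n \<sigma>)"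
proof
  show "set_partitions (Suc n) \<subseteq> (\<Union>\<sigma>\<in>set_partitions n. ext n \<sigma>)"
  proof
    fix \<rho> assume "\<rho> \<in> set_partitions (Suc n)"
    from res_surj[OF this] show "\<rho> \<in> (\<Union>\<sigma>\<in>set_partitions n. ext n \<sigma>)"
      by (auto simp: ext_def)
  qed
  show "(\<Union>\<sigma>\<in>set_partitions n. ext n \<sigma>) \<subseteq> set_partitions (Suc n)"
    using E0_part EC_part by (auto simp: ext_def)
qed

lemma sum_ext:
  "(\<Sum>\<rho>\<in>set_partitions (Suc n). h \<rho>) =
     (\<Sum>\<sigma>\<in>set_partitions n. h (E0 n \<sigma>) + (\<Sum>C\<in>\<sigma>. h (EC n \<sigma> C)))"
proof -
  have "(\<Sum>\<rho>\<in>set_partitions (Suc n). h \<rho>) = (\<Sum>\<sigma>\<in>set_partitions n. sum h (ext n \<sigma>))"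
    unfolding sp_Suc_Union
  proof (rule sum.UNION_disjoint)
    show "finite (set_partitions n)" by (rule finite_set_partitions)
    show "\<forall>\<sigma>\<in>set_partitions n. finite (ext n \<sigma>)"
      by (auto simp: ext_def set_partitions_finite)
    show "\<forall>i\<in>set_partitions n. \<forall>j\<in>set_partitions n. i \<noteq> j \<longrightarrow> ext n i \<inter> ext n j = {}"
    proof (intro ballI impI)
      fix i j assume ij: "i \<in> set_partitions n" "j \<in> set_partitions n" "i \<noteq> j"
      have "res n \<rho> = i" if "\<rho> \<in> ext n i" for \<rho> using that ij res_E0 res_EC by (auto simp: ext_def)
      moreover have "res n \<rho> = j" if "\<rho> \<in> ext n j" for \<rho> using that ij res_E0 res_EC by (auto simp: ext_def)
      ultimately show "ext n i \<inter> ext n j = {}" using ij by blast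
    qed
  qed
  also have "\<dots> = (\<Sum>\<sigma>\<in>set_partitions n. h (E0 n \<sigma>) + (\<Sum>C\<in>\<sigma>. h (EC n \<sigma> C)))"
  proof (rule sum.cong[OF refl])
    fix \<sigma> assume s: "\<sigma> \<in> set_partitions n"
    have "E0 n \<sigma> \<notin> EC n \<sigma> ` \<sigma>" using E0_ne_EC[OF s] by auto
    then have "sum h (ext n \<sigma>) = h (E0 n \<sigma>) + sum h (EC n \<sigma> ` \<sigma>)"
      unfolding ext_def using set_partitions_finite[OF s] by simp
    also have "sum h (EC n \<sigma> ` \<sigma>) = (\<Sum>C\<in>\<sigma>. h (EC n \<sigma> C))"
      by (rule sum.reindex_cong[OF EC_inj[OF s]]) auto
    finally show "sum h (ext n \<sigma>) = h (E0 n \<sigma>) + (\<Sum>C\<in>\<sigma>. h (EC n \<sigma> C))" .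
  qed
  finally show ?thesis .
qed

lemma card_filter_sum: "finite A \<Longrightarrow> real (card {x\<in>A. P x}) = (\<Sum>x\<in>A. if P x then 1 else 0)"
  using sum.inter_filter[of A "\<lambda>_. (1::real)" P] by simp

lemma card_E0: assumes "\<sigma> \<in> set_partitions n" shows "card (E0 n \<sigma>) = Suc (card \<sigma>)"
proof -
  have "{Suc n} \<notin> \<sigma>" using sp_sub[OF assms] by fastforce
  then show ?thesis using set_partitions_finite[OF assms] by (simp add: E0_def)
qed

lemma card_EC: assumes "\<sigma> \<in> set_partitions n" "C \<in> \<sigma>" shows "card (EC n \<sigma> C) = card \<sigma>"
proof -
  have "insert (Suc n) C \<notin> \<sigma> - {C}" using sp_sub[OF assms(1)] by fastforce
  moreover have "finite \<sigma>" using set_partitions_finite[OF assms(1)] .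
  moreover have "card \<sigma> > 0" using assms(2) \<open>finite \<sigma>\<close> card_gt_0_iff by blast
  ultimately show ?thesis using assms(2) by (simp add: EC_def card_Suc_Diff1)
qed

lemma blocks_nonempty: "\<sigma> \<in> set_partitions n \<Longrightarrow> B \<in> \<sigma> \<Longrightarrow> B \<noteq> {}"
  by (auto simp: sp_iff)

lemma blocks_eq: "\<sigma> \<in> set_partitions n \<Longrightarrow> A \<in> \<sigma> \<Longrightarrow> B \<in> \<sigma> \<Longrightarrow> x \<in> A \<Longrightarrow> x \<in> B \<Longrightarrow> A = B"
  by (auto simp: sp_iff)

lemma contains_singletons:
  assumes s: "\<sigma> \<in> set_partitions n"
  shows "contains \<sigma> (singletons_part m) \<longleftrightarrow> m \<le> card \<sigma>"
proof
  assume "contains \<sigma> (singletons_part m)"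
  then obtain \<tau> where t: "subpartition \<tau> \<sigma>" "st \<tau> = singletons_part m" by (auto simp: contains_def)
  have "card (singletons_part m) = m" unfolding singletons_part_def
    by (subst card_image) (auto simp: inj_on_def)
  moreover have "card (st \<tau>) = card \<tau>" using subpartition_props(2)[OF t(1) s] by (rule card_st)
  moreover have "card \<tau> \<le> card \<sigma>"
  proof -
    obtain f where f: "\<forall>B\<in>\<tau>. f B \<in> \<sigma> \<and> B \<subseteq> f B" "inj_on f \<tau>"
      using t(1) by (auto simp: subpartition_def)
    show ?thesis using f set_partitions_finite[OF s] by (intro card_inj_on_le[of f]) auto
  qed
  ultimately show "m \<le> card \<sigma>" using t(2) by simp
next
  assume "m \<le> card \<sigma>"
  then obtain \<sigma>0 where s0: "\<sigma>0 \<subseteq> \<sigma>" "card \<sigma>0 = m" "finite \<sigma>0" by (rule obtain_subset_with_card_n)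
  define z where "z B = (SOME x. x \<in> B)" for B :: "nat set"
  have zB: "z B \<in> B" if "B \<in> \<sigma>" for B
    using blocks_nonempty[OF s that] unfolding z_def by (simp add: some_in_eq)
  have zinj: "inj_on z \<sigma>0"
    by (rule inj_onI) (metis zB blocks_eq[OF s] s0(1) subsetD)
  define S where "S = z ` \<sigma>0"
  have cS: "card S = m" using zinj s0 by (simp add: S_def card_image)
  have fS: "finite S" using s0 by (simp add: S_def)
  define \<tau> where "\<tau> = (\<lambda>x. {x}) ` S"
  have U: "\<Union>\<tau> = S" by (auto simp: \<tau>_def)
  have sub: "subpartition \<tau> \<sigma>"
  proof (rule subpartition_intro)
    have "partition_on S \<tau>" unfolding \<tau>_def by (rule partition_on_singletons)
    then show "partition_on (\<Union>\<tau>) \<tau>" using U by simp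
    show "\<exists>D\<in>\<sigma>. T \<subseteq> D" if "T \<in> \<tau>" for T
      using that zB s0(1) by (auto simp: \<tau>_def S_def)
    show "T1 = T2" if H: "T1 \<in> \<tau>" "T2 \<in> \<tau>" "D \<in> \<sigma>" "T1 \<subseteq> D" "T2 \<subseteq> D" for T1 T2 D
    proof -
      obtain B1 B2 where B: "B1 \<in> \<sigma>0" "B2 \<in> \<sigma>0" "T1 = {z B1}" "T2 = {z B2}"
        using H(1,2) by (auto simp: \<tau>_def S_def)
      have "B1 = D" using blocks_eq[OF s, of B1 D "z B1"] zB B(1,3) s0(1) H(3,4) by auto
      moreover have "B2 = D" using blocks_eq[OF s, of B2 D "z B2"] zB B(2,4) s0(1) H(3,5) by auto
      ultimately show ?thesis using B by simp
    qed
  qed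
  have "st \<tau> = (\<lambda>x. {st_map S x}) ` S" unfolding st_def U by (auto simp: \<tau>_def image_image)
  also have "\<dots> = (\<lambda>i. {i}) ` (st_map S ` S)" by (simp add: image_image)
  also have "\<dots> = singletons_part m" by (simp add: st_map_image[OF fS] cS singletons_part_def)
  finally show "contains \<sigma> (singletons_part m)" using sub by (auto simp: contains_def)
qed

definition ks :: "nat \<Rightarrow> nat \<Rightarrow> real" where
  "ks k n = (\<Sum>\<sigma>\<in>set_partitions n. if card \<sigma> = k then 1 else 0)"

lemma ks_rec: "ks k (Suc n) = (if k = 0 then 0 else ks (k - 1) n) + real k * ks k n"
proof -
  have "ks k (Suc n) = (\<Sum>\<sigma>\<in>set_partitions n. (if card (E0 n \<sigma>) = k then 1 else 0) +
            (\<Sum>C\<in>\<sigma>. if card (EC n \<sigma> C) = k then 1 else 0))"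
    unfolding ks_def by (rule sum_ext)
  also have "\<dots> = (\<Sum>\<sigma>\<in>set_partitions n. (if Suc (card \<sigma>) = k then 1 else 0) +
            real k * (if card \<sigma> = k then 1 else 0))"
  proof (rule sum.cong[OF refl])
    fix \<sigma> assume s: "\<sigma> \<in> set_partitions n"
    have "(\<Sum>C\<in>\<sigma>. if card (EC n \<sigma> C) = k then 1 else 0) = (\<Sum>C\<in>\<sigma>. if card \<sigma> = k then (1::real) else 0)"
      by (rule sum.cong) (auto simp: card_EC[OF s])
    also have "\<dots> = real k * (if card \<sigma> = k then 1 else 0)" by simp
    finally show "(if card (E0 n \<sigma>) = k then 1 else 0) + (\<Sum>C\<in>\<sigma>. if card (EC n \<sigma> C) = k then 1 else 0)
       = (if Suc (card \<sigma>) = k then 1 else 0) + real k * (if card \<sigma> = k then (1::real) else 0)"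
      by (simp add: card_E0[OF s])
  qed
  also have "\<dots> = (\<Sum>\<sigma>\<in>set_partitions n. (if Suc (card \<sigma>) = k then 1 else 0)) + real k * ks k n"
    by (simp add: sum.distrib ks_def sum_distrib_left)
  also have "(\<Sum>\<sigma>\<in>set_partitions n. (if Suc (card \<sigma>) = k then 1 else 0)) = (if k = 0 then 0 else ks (k - 1) n)"
    unfolding ks_def by (cases k) auto
  finally show ?thesis .
qed

lemma cfin_ks: "cfin (ks k)"
proof (induction k)
  case 0
  show ?case by (rule cfin_solve[of "\<lambda>n. 0" _ 0]) (auto simp: cfin_zero ks_rec)
next
  case (Suc k)
  show ?case by (rule cfin_solve[OF Suc, of _ "real (Suc k)"]) (simp add: ks_rec)
qed

lemma singletons_count:
  "real (card (avoiders n (singletons_part m))) = (\<Sum>k<m. ks k n)"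
proof -
  have "avoiders n (singletons_part m) = {\<sigma>\<in>set_partitions n. card \<sigma> < m}"
    using contains_singletons by (auto simp: avoiders_def not_le)
  then have "real (card (avoiders n (singletons_part m))) = (\<Sum>\<sigma>\<in>set_partitions n. if card \<sigma> < m then 1 else 0)"
    using finite_set_partitions by (simp add: card_filter_sum)
  also have "\<dots> = (\<Sum>\<sigma>\<in>set_partitions n. \<Sum>k<m. if card \<sigma> = k then 1 else 0)"
    by (rule sum.cong) auto
  also have "\<dots> = (\<Sum>k<m. ks k n)" unfolding ks_def by (rule sum.swap)
  finally show ?thesis .
qed

lemma singletons_Prec: "P_recursive (\<lambda>n. real (card (avoiders n (singletons_part m))))"
  unfolding singletons_count by (rule cfin_P_recursive, rule cfin_sum, rule cfin_ks)

definition fb :: "nat \<Rightarrow> nat set \<Rightarrow> nat" where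
  "fb m A = card {P. partition_on A P \<and> (\<forall>B\<in>P. card B < m)}"

lemma fin_parts_on: assumes "finite A" shows "finite {P. partition_on A P \<and> Q P}"
proof -
  have "finite {P. partition_on A P}" by (rule finitely_many_partition_on[OF assms])
  then show ?thesis by (rule finite_subset[rotated]) auto
qed

lemma fb_decomp_set:
  assumes "finite A" "x \<notin> A"
  shows "{Q. partition_on (insert x A) Q \<and> (\<forall>B\<in>Q. card B < m)} =
    (\<Union>S\<in>{S. S \<subseteq> A \<and> card S + 2 \<le> m}. insert (insert x S) ` {P. partition_on (A - S) P \<and> (\<forall>B\<in>P. card B < m)})"
    (is "?L = ?R")
proof
  show "?L \<subseteq> ?R"
  proof
    fix Q assume Q: "Q \<in> ?L"
    then have p: "partition_on (insert x A) Q" and g: "\<forall>B\<in>Q. card B < m" by auto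
    have "x \<in> \<Union>Q" using p by (auto simp: partition_on_def)
    then obtain R where R: "R \<in> Q" "x \<in> R" by blast
    define S where "S = R - {x}"
    define P where "P = Q - {R}"
    have RS: "R = insert x S" using R by (auto simp: S_def)
    have Rsub: "R \<subseteq> insert x A" using p R by (auto simp: partition_on_def)
    have SA: "S \<subseteq> A" using Rsub by (auto simp: S_def)
    have fS: "finite S" using SA assms(1) finite_subset by blast
    have "card R < m" using g R by auto
    moreover have "x \<notin> S" by (simp add: S_def)
    then have "card R = Suc (card S)" using fS by (subst RS) simp
    ultimately have cS: "card S + 2 \<le> m" by simp
    have QP: "Q = insert R P" using R by (auto simp: P_def)
    have dis: "disjnt R (\<Union>P)"
      using p R unfolding partition_on_def disjoint_def disjnt_def P_def by blast
    have "partition_on (insert x A - R) P" using p unfolding QP partition_on_insert[OF dis] by simp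
    moreover have "insert x A - R = A - S" using RS assms(2) by auto
    ultimately have "partition_on (A - S) P" by simp
    moreover have "\<forall>B\<in>P. card B < m" using g by (auto simp: P_def)
    ultimately show "Q \<in> ?R" using SA cS QP RS by blast
  qed
  show "?R \<subseteq> ?L"
  proof
    fix Q assume "Q \<in> ?R"
    then obtain S P where S: "S \<subseteq> A" "card S + 2 \<le> m" and P: "partition_on (A - S) P" "\<forall>B\<in>P. card B < m"
      and Q: "Q = insert (insert x S) P" by blast
    have fS: "finite S" using S assms(1) finite_subset by blast
    have dis: "disjnt (insert x S) (\<Union>P)" using P assms(2) by (auto simp: partition_on_def disjnt_def)
    have "partition_on (insert x A) Q" unfolding Q partition_on_insert[OF dis]
    proof (intro conjI)
      show "partition_on (insert x A - insert x S) P" using P assms(2) by (simp add: Diff_insert2[symmetric])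
    qed (use S in auto)
    moreover have "card (insert x S) < m" using fS S assms(2) by (auto simp: card_insert_if)
    ultimately show "Q \<in> ?L" using P Q by auto
  qed
qed

lemma fb_decomp:
  assumes "finite A" "x \<notin> A"
  shows "fb m (insert x A) = (\<Sum>S\<in>{S. S \<subseteq> A \<and> card S + 2 \<le> m}. fb m (A - S))"
proof -
  have "fb m (insert x A) = card (\<Union>S\<in>{S. S \<subseteq> A \<and> card S + 2 \<le> m}. insert (insert x S) ` {P. partition_on (A - S) P \<and> (\<forall>B\<in>P. card B < m)})"
    unfolding fb_def fb_decomp_set[OF assms] ..
  also have "\<dots> = (\<Sum>S\<in>{S. S \<subseteq> A \<and> card S + 2 \<le> m}. card (insert (insert x S) ` {P. partition_on (A - S) P \<and> (\<forall>B\<in>P. card B < m)}))"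
  proof (rule card_UN_disjoint)
    show "finite {S. S \<subseteq> A \<and> card S + 2 \<le> m}" using assms(1) by simp
    show "\<forall>S\<in>{S. S \<subseteq> A \<and> card S + 2 \<le> m}. finite (insert (insert x S) ` {P. partition_on (A - S) P \<and> (\<forall>B\<in>P. card B < m)})"
      using assms(1) by (auto intro!: finite_imageI fin_parts_on)
    show "\<forall>S1\<in>{S. S \<subseteq> A \<and> card S + 2 \<le> m}. \<forall>S2\<in>{S. S \<subseteq> A \<and> card S + 2 \<le> m}. S1 \<noteq> S2 \<longrightarrow>
      insert (insert x S1) ` {P. partition_on (A - S1) P \<and> (\<forall>B\<in>P. card B < m)} \<inter>
      insert (insert x S2) ` {P. partition_on (A - S2) P \<and> (\<forall>B\<in>P. card B < m)} = {}"
    proof (intro ballI impI)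
      fix S1 S2 assume S: "S1 \<in> {S. S \<subseteq> A \<and> card S + 2 \<le> m}" "S2 \<in> {S. S \<subseteq> A \<and> card S + 2 \<le> m}" "S1 \<noteq> S2"
      show "insert (insert x S1) ` {P. partition_on (A - S1) P \<and> (\<forall>B\<in>P. card B < m)} \<inter>
      insert (insert x S2) ` {P. partition_on (A - S2) P \<and> (\<forall>B\<in>P. card B < m)} = {}"
      proof (rule ccontr)
        assume "\<not> ?thesis"
        then obtain P1 P2 where P: "partition_on (A - S1) P1" "partition_on (A - S2) P2"
          and eq: "insert (insert x S1) P1 = insert (insert x S2) P2" by blast
        have n1: "insert x S1 \<notin> P2" using P(2) assms(2) by (auto simp: partition_on_def)
        have "insert x S1 \<in> insert (insert x S2) P2" using eq by blast
        then have "insert x S1 = insert x S2" using n1 by blast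
        then show False using S assms(2) by (metis (no_types, lifting) insert_ident mem_Collect_eq subsetD)
      qed
    qed
  qed
  also have "\<dots> = (\<Sum>S\<in>{S. S \<subseteq> A \<and> card S + 2 \<le> m}. fb m (A - S))"
  proof (rule sum.cong[OF refl])
    fix S assume S: "S \<in> {S. S \<subseteq> A \<and> card S + 2 \<le> m}"
    have "inj_on (insert (insert x S)) {P. partition_on (A - S) P \<and> (\<forall>B\<in>P. card B < m)}"
    proof (rule inj_onI)
      fix P1 P2 assume P: "P1 \<in> {P. partition_on (A - S) P \<and> (\<forall>B\<in>P. card B < m)}"
        "P2 \<in> {P. partition_on (A - S) P \<and> (\<forall>B\<in>P. card B < m)}"
        and eq: "insert (insert x S) P1 = insert (insert x S) P2"
      have "insert x S \<notin> P1" "insert x S \<notin> P2" using P assms(2) by (auto simp: partition_on_def)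
      then show "P1 = P2" using eq by (metis insert_ident)
    qed
    then show "card (insert (insert x S) ` {P. partition_on (A - S) P \<and> (\<forall>B\<in>P. card B < m)}) = fb m (A - S)"
      by (simp add: card_image fb_def)
  qed
  finally show ?thesis .
qed

lemma sum_group_card:
  assumes "finite A"
  shows "(\<Sum>S\<in>{S. S \<subseteq> A \<and> card S + 2 \<le> m}. h (card S)) = (\<Sum>i<m - 1. (card A choose i) * h i)"
proof -
  have e: "{S. S \<subseteq> A \<and> card S + 2 \<le> m} = (\<Union>i\<in>{..<m - 1}. {S. S \<subseteq> A \<and> card S = i})" by auto
  have "(\<Sum>S\<in>{S. S \<subseteq> A \<and> card S + 2 \<le> m}. h (card S)) = (\<Sum>i<m - 1. \<Sum>S\<in>{S. S \<subseteq> A \<and> card S = i}. h (card S))"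
    unfolding e using assms by (intro sum.UNION_disjoint) auto
  also have "\<dots> = (\<Sum>i<m - 1. (card A choose i) * h i)"
  proof (rule sum.cong[OF refl])
    fix i
    have "(\<Sum>S\<in>{S. S \<subseteq> A \<and> card S = i}. h (card S)) = (\<Sum>S\<in>{S. S \<subseteq> A \<and> card S = i}. h i)"
      by (rule sum.cong) auto
    also have "\<dots> = (card A choose i) * h i" using n_subsets[OF assms, of i] by simp
    finally show "(\<Sum>S\<in>{S. S \<subseteq> A \<and> card S = i}. h (card S)) = (card A choose i) * h i" .
  qed
  finally show ?thesis .
qed

lemma fb_card: "finite A \<Longrightarrow> fb m A = fb m {1..card A}"
proof (induction "card A" arbitrary: A rule: less_induct)
  case less
  show ?case
  proof (cases "A = {}")
    case True then show ?thesis by simp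
  next
    case False
    then obtain x where x: "x \<in> A" by blast
    define A0 where "A0 = A - {x}"
    have A: "A = insert x A0" "x \<notin> A0" using x by (auto simp: A0_def)
    have f0: "finite A0" using less.prems A by simp
    have cA: "card A = Suc (card A0)" using A f0 by simp
    let ?j = "card A0"
    have IH: "fb m B = fb m {1..card B}" if "finite B" "card B < card A" for B
      using less.hyps that by blast
    have gen: "fb m (insert y B) = (\<Sum>i<m - 1. (card B choose i) * fb m {1..card B - i})"
      if "finite B" "y \<notin> B" "card B = ?j" for y B
    proof -
      have "fb m (insert y B) = (\<Sum>S\<in>{S. S \<subseteq> B \<and> card S + 2 \<le> m}. fb m (B - S))"
        using fb_decomp[OF that(1,2)] by simp
      also have "\<dots> = (\<Sum>S\<in>{S. S \<subseteq> B \<and> card S + 2 \<le> m}. fb m {1..card B - card S})"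
      proof (rule sum.cong[OF refl])
        fix S assume "S \<in> {S. S \<subseteq> B \<and> card S + 2 \<le> m}"
        then have S: "S \<subseteq> B" by auto
        have fS: "finite S" using S that(1) finite_subset by blast
        have "card (B - S) = card B - card S" using S fS by (simp add: card_Diff_subset)
        moreover have "card (B - S) < card A" using cA that(3) card_mono[OF that(1), of "B - S"] by auto
        ultimately show "fb m (B - S) = fb m {1..card B - card S}"
          using IH[of "B - S"] that(1) by auto
      qed
      also have "\<dots> = (\<Sum>i<m - 1. (card B choose i) * fb m {1..card B - i})"
        by (rule sum_group_card[OF that(1), where m=m and h="\<lambda>k. fb m {1..card B - k}"])
      finally show ?thesis .
    qed
    have "fb m A = (\<Sum>i<m - 1. (?j choose i) * fb m {1..?j - i})" using gen[OF f0 A(2)] A by simp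
    moreover have "fb m {1..card A} = (\<Sum>i<m - 1. (?j choose i) * fb m {1..?j - i})"
    proof -
      have "{1..card A} = insert (Suc ?j) {1..?j}" using cA by auto
      then show ?thesis using gen[of "{1..?j}" "Suc ?j"] by simp
    qed
    ultimately show ?thesis by simp
  qed
qed

lemma fb_rec: "fb m {1..Suc n} = (\<Sum>i<m - 1. (n choose i) * fb m {1..n - i})"
proof -
  have "{1..Suc n} = insert (Suc n) {1..n}" by auto
  then have "fb m {1..Suc n} = (\<Sum>S\<in>{S. S \<subseteq> {1..n} \<and> card S + 2 \<le> m}. fb m ({1..n} - S))"
    using fb_decomp[of "{1..n}" "Suc n" m] by simp
  also have "\<dots> = (\<Sum>S\<in>{S. S \<subseteq> {1..n} \<and> card S + 2 \<le> m}. fb m {1..n - card S})"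
  proof (rule sum.cong[OF refl])
    fix S assume "S \<in> {S. S \<subseteq> {1..n} \<and> card S + 2 \<le> m}"
    then have S: "S \<subseteq> {1..n}" by auto
    have "card ({1..n} - S) = n - card S" using S by (simp add: card_Diff_subset finite_subset)
    then show "fb m ({1..n} - S) = fb m {1..n - card S}" using fb_card[of "{1..n} - S" m] by simp
  qed
  also have "\<dots> = (\<Sum>i<m - 1. (n choose i) * fb m {1..n - i})"
    using sum_group_card[of "{1..n}", where m=m and h="\<lambda>k. fb m {1..n - k}"] by simp
  finally show ?thesis .
qed

lemma contains_oneblock:
  assumes s: "\<sigma> \<in> set_partitions n" and m: "m \<ge> 1"
  shows "contains \<sigma> (oneblock_part m) \<longleftrightarrow> (\<exists>B\<in>\<sigma>. m \<le> card B)"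
proof
  assume "contains \<sigma> (oneblock_part m)"
  then obtain \<tau> where t: "subpartition \<tau> \<sigma>" "st \<tau> = {{1..m}}" by (auto simp: contains_def oneblock_part_def)
  define S where "S = \<Union>\<tau>"
  have fS: "finite S" using subpartition_props(2)[OF t(1) s] by (simp add: S_def)
  have "\<tau> \<noteq> {}" using t(2) by (auto simp: st_def)
  then obtain T where T: "T \<in> \<tau>" by blast
  have "st_map S ` T \<in> st \<tau>" using T by (auto simp: st_def S_def)
  then have "st_map S ` T = {1..m}" using t(2) by simp
  moreover have "st_map S ` S = {1..m}" using Union_st[of \<tau>] t(2) by (simp add: S_def)
  ultimately have "st_map S ` T = st_map S ` S" by simp
  moreover have "T \<subseteq> S" using T by (auto simp: S_def)
  ultimately have TS: "T = S" using inj_on_image_eq_iff[OF st_map_inj[OF fS]] by blast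
  have "card S = m" using st_map_image[OF fS] \<open>st_map S ` S = {1..m}\<close>
    by (metis card_atLeastAtMost diff_Suc_1)
  obtain f where f: "\<forall>B\<in>\<tau>. f B \<in> \<sigma> \<and> B \<subseteq> f B" using t(1) by (auto simp: subpartition_def)
  have "f T \<in> \<sigma>" "T \<subseteq> f T" using f T by auto
  moreover have "finite (f T)" using set_partitions_finite_blocks(3)[OF s] \<open>f T \<in> \<sigma>\<close> .
  ultimately have "card T \<le> card (f T)" by (simp add: card_mono)
  then show "\<exists>B\<in>\<sigma>. m \<le> card B" using \<open>f T \<in> \<sigma>\<close> TS \<open>card S = m\<close> by auto
next
  assume "\<exists>B\<in>\<sigma>. m \<le> card B"
  then obtain B where B: "B \<in> \<sigma>" "m \<le> card B" by blast
  then obtain T where T: "T \<subseteq> B" "card T = m" "finite T" by (meson obtain_subset_with_card_n)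
  have Tne: "T \<noteq> {}" using T m by auto
  have sub: "subpartition {T} \<sigma>"
  proof (rule subpartition_intro)
    show "partition_on (\<Union>{T}) {T}" using Tne by (simp add: partition_on_space)
  qed (use B T in auto)
  have "st {T} = {{1..m}}" using st_map_image[OF T(3)] T(2) by (simp add: st_def)
  then show "contains \<sigma> (oneblock_part m)" using sub by (auto simp: contains_def oneblock_part_def)
qed

lemma oneblock_count:
  assumes "m \<ge> 1"
  shows "card (avoiders n (oneblock_part m)) = fb m {1..n}"
proof -
  have "avoiders n (oneblock_part m) = {\<sigma>\<in>set_partitions n. (\<forall>B\<in>\<sigma>. card B < m)}"
    unfolding avoiders_def by (auto simp: contains_oneblock[OF _ assms]) (meson not_le)+
  also have "\<dots> = {P. partition_on {1..n} P \<and> (\<forall>B\<in>P. card B < m)}"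
    by (auto simp: set_partitions_def)
  finally show ?thesis by (simp add: fb_def)
qed

definition bp :: "nat \<Rightarrow> nat \<Rightarrow> real poly" where
  "bp c i = smult (1 / fact i) (\<Prod>t<i. [:real c - real t, 1:])"

lemma poly_bp: "poly (bp c i) (real n) = real ((n + c) choose i)"
proof -
  have "real ((n + c) choose i) = real (n + c) gchoose i" by (rule binomial_gbinomial)
  also have "\<dots> = (\<Prod>t<i. real (n + c) - real t) / fact i"
    by (simp add: gbinomial_prod_rev atLeast0LessThan)
  also have "\<dots> = poly (bp c i) (real n)"
    by (simp add: bp_def poly_prod algebra_simps)
  finally show ?thesis by simp
qed

lemma oneblock_Prec:
  assumes m: "m \<ge> 1"
  shows "P_recursive (\<lambda>n. real (card (avoiders n (oneblock_part m))))"
proof -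
  define a where "a n = real (fb m {1..n})" for n
  have rec: "a (n + m) = (\<Sum>i<m - 1. real ((n + (m - 1)) choose i) * a (n + (m - 1) - i))" for n
  proof -
    have "n + m = Suc (n + (m - 1))" using m by simp
    then show ?thesis unfolding a_def by (simp only: fb_rec) simp
  qed
  define P where "P j = (if j = m then 1 else if 1 \<le> j then - bp (m - 1) (m - 1 - j) else 0)" for j
  have "(\<Sum>j\<le>m. poly (P j) (real n) * a (n + j)) = 0" for n
  proof -
    have split: "{..m} = insert m (insert 0 {1..<m})" using m by auto
    have "(\<Sum>j\<le>m. poly (P j) (real n) * a (n + j)) = a (n + m) + (\<Sum>j\<in>{1..<m}. poly (P j) (real n) * a (n + j))"
    proof -
      have "m \<notin> insert 0 {1..<m}" "0 \<notin> {1..<m}" using m by auto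
      moreover have "(\<Sum>j\<in>{1..<m}. poly (P j) (real n) * a (n + j)) = (\<Sum>j\<in>{1..<m}. poly (P j) (real n) * a (n + j))" ..
      ultimately show ?thesis unfolding split using m by (simp add: P_def)
    qed
    also have "(\<Sum>j\<in>{1..<m}. poly (P j) (real n) * a (n + j)) = - (\<Sum>j\<in>{1..<m}. real ((n + (m - 1)) choose (m - 1 - j)) * a (n + (m - 1) - (m - 1 - j)))"
      by (simp add: P_def poly_bp sum_negf[symmetric])
    also have "(\<Sum>j\<in>{1..<m}. real ((n + (m - 1)) choose (m - 1 - j)) * a (n + (m - 1) - (m - 1 - j))) =
       (\<Sum>i<m - 1. real ((n + (m - 1)) choose i) * a (n + (m - 1) - i))"
      by (rule sum.reindex_bij_witness[of _ "\<lambda>i. m - 1 - i" "\<lambda>j. m - 1 - j"]) auto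
    finally show ?thesis using rec[of n] by simp
  qed
  moreover have "P m \<noteq> 0" by (simp add: P_def)
  ultimately have "P_recursive a" unfolding P_recursive_def by (intro exI[of _ m] exI[of _ P]) auto
  moreover have "(\<lambda>n. real (card (avoiders n (oneblock_part m)))) = a"
    by (rule ext) (simp add: a_def oneblock_count[OF m])
  ultimately show ?thesis by simp
qed

definition bad :: "nat \<Rightarrow> nat set set \<Rightarrow> bool" where
  "bad m \<sigma> \<longleftrightarrow> (\<exists>B\<in>\<sigma>. \<exists>a\<in>B. \<exists>b\<in>B. a < b \<and> m - 2 \<le> card {D\<in>\<sigma>. D \<noteq> B \<and> (\<exists>y\<in>D. b < y)})"

lemma card_pair_part: assumes "m \<ge> 2" shows "card (pair_singletons_part m) = m - 1"
proof -
  have "{1,2} \<notin> (\<lambda>i. {i}) ` {3..m}" by auto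
  moreover have "card ((\<lambda>i. {i::nat}) ` {3..m}) = m - 2" by (subst card_image) (auto simp: inj_on_def)
  ultimately show ?thesis using assms by (simp add: pair_singletons_part_def)
qed

lemma contains_pair_imp_bad:
  assumes s: "\<sigma> \<in> set_partitions n" and m: "m \<ge> 2" and c: "contains \<sigma> (pair_singletons_part m)"
  shows "bad m \<sigma>"
proof -
  obtain \<tau> where t: "subpartition \<tau> \<sigma>" "st \<tau> = pair_singletons_part m" using c by (auto simp: contains_def)
  define S where "S = \<Union>\<tau>"
  have fS: "finite S" using subpartition_props(2)[OF t(1) s] by (simp add: S_def)
  have ft: "finite \<tau>" using subpartition_props(3)[OF t(1) s] .
  have ne: "{} \<notin> \<tau>" using subpartition_props(4)[OF t(1) s] .
  obtain f where f: "\<forall>B\<in>\<tau>. f B \<in> \<sigma> \<and> B \<subseteq> f B" "inj_on f \<tau>" using t(1) by (auto simp: subpartition_def)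
  have inj: "inj_on ((`) (st_map S)) \<tau>" using st_inj_blocks[OF fS[unfolded S_def]] by (simp add: S_def)
  have "{1,2} \<in> st \<tau>" using t(2) by (simp add: pair_singletons_part_def)
  then obtain T where T: "T \<in> \<tau>" "st_map S ` T = {1,2}" by (auto simp: st_def S_def)
  obtain a where a: "a \<in> T" "st_map S a = 1" using T(2) by (metis imageE insertI1)
  obtain b where b: "b \<in> T" "st_map S b = 2" using T(2) by (metis imageE insertI1 insert_commute)
  have TS: "T \<subseteq> S" using T by (auto simp: S_def)
  have ab: "a < b" using st_map_less_iff[OF fS, of a b] a b TS by auto
  define \<tau>' where "\<tau>' = \<tau> - {T}"
  have big: "\<exists>z\<in>T'. b < z" if "T' \<in> \<tau>'" for T'
  proof -
    have T': "T' \<in> \<tau>" "T' \<noteq> T" using that by (auto simp: \<tau>'_def)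
    have "st_map S ` T' \<in> st \<tau>" using T' by (auto simp: st_def S_def)
    moreover have "st_map S ` T' \<noteq> {1,2}" using T' T inj by (metis inj_on_contraD)
    ultimately obtain i where i: "i \<in> {3..m}" "st_map S ` T' = {i}"
      using t(2) by (auto simp: pair_singletons_part_def)
    have "T' \<noteq> {}" using ne T'(1) by metis
    then obtain z where z: "z \<in> T'" by blast
    have "st_map S z = i" using i z by auto
    then have "st_map S b < st_map S z" using b i by simp
    moreover have "z \<in> S" using z T' by (auto simp: S_def)
    ultimately have "b < z" using st_map_less_iff[OF fS] b TS by blast
    then show ?thesis using z by blast
  qed
  have "card \<tau> = m - 1" using card_st[OF fS[unfolded S_def]] t(2) card_pair_part[OF m] by simp
  then have ct': "card \<tau>' = m - 2" using T ft by (simp add: \<tau>'_def)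
  define B where "B = f T"
  have B: "B \<in> \<sigma>" "a \<in> B" "b \<in> B" using f T a b by (auto simp: B_def)
  have "f ` \<tau>' \<subseteq> {D\<in>\<sigma>. D \<noteq> B \<and> (\<exists>y\<in>D. b < y)}"
  proof
    fix D assume "D \<in> f ` \<tau>'"
    then obtain T' where T': "T' \<in> \<tau>'" "D = f T'" by blast
    have "T' \<in> \<tau>" "T' \<noteq> T" using T' by (auto simp: \<tau>'_def)
    then have "D \<in> \<sigma>" "D \<noteq> B" "T' \<subseteq> D" using f T T' by (auto simp: B_def inj_on_def)
    then show "D \<in> {D\<in>\<sigma>. D \<noteq> B \<and> (\<exists>y\<in>D. b < y)}" using big[OF T'(1)] by auto
  qed
  moreover have "finite {D\<in>\<sigma>. D \<noteq> B \<and> (\<exists>y\<in>D. b < y)}" using set_partitions_finite[OF s] by simp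
  ultimately have le: "card (f ` \<tau>') \<le> card {D\<in>\<sigma>. D \<noteq> B \<and> (\<exists>y\<in>D. b < y)}"
    by (intro card_mono)
  have "inj_on f \<tau>'" using f(2) by (rule inj_on_subset) (auto simp: \<tau>'_def)
  then have "card (f ` \<tau>') = m - 2" using ct' by (simp add: card_image)
  then have "m - 2 \<le> card {D\<in>\<sigma>. D \<noteq> B \<and> (\<exists>y\<in>D. b < y)}" using le by simp
  then show ?thesis unfolding bad_def using B ab by blast
qed

lemma bad_imp_contains_pair:
  assumes s: "\<sigma> \<in> set_partitions n" and m: "m \<ge> 2" and bd: "bad m \<sigma>"
  shows "contains \<sigma> (pair_singletons_part m)"
proof -
  obtain B a b where B: "B \<in> \<sigma>" "a \<in> B" "b \<in> B" "a < b"
    and K: "m - 2 \<le> card {D\<in>\<sigma>. D \<noteq> B \<and> (\<exists>y\<in>D. b < y)}" using bd by (auto simp: bad_def)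
  obtain K0 where K0: "K0 \<subseteq> {D\<in>\<sigma>. D \<noteq> B \<and> (\<exists>y\<in>D. b < y)}" "card K0 = m - 2" "finite K0"
    using K by (meson obtain_subset_with_card_n)
  define z where "z D = (SOME y. y \<in> D \<and> b < y)" for D
  have zD: "z D \<in> D" "b < z D" if "D \<in> K0" for D
    using K0(1) that someI_ex[of "\<lambda>y. y \<in> D \<and> b < y"] by (auto simp: z_def)
  have K0s: "D \<in> \<sigma>" "D \<noteq> B" if "D \<in> K0" for D using K0(1) that by auto
  have zinj: "inj_on z K0"
  proof (rule inj_onI)
    fix D1 D2 assume "D1 \<in> K0" "D2 \<in> K0" "z D1 = z D2"
    then show "D1 = D2" using blocks_eq[OF s, of D1 D2 "z D1"] zD K0s by metis
  qed
  define Z where "Z = z ` K0"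
  have cZ: "card Z = m - 2" using zinj K0 by (simp add: Z_def card_image)
  have fZ: "finite Z" using K0 by (simp add: Z_def)
  have Zb: "\<forall>y\<in>Z. b < y" using zD by (auto simp: Z_def)
  define \<tau> where "\<tau> = insert {a,b} ((\<lambda>y. {y}) ` Z)"
  define S where "S = insert a (insert b Z)"
  have US: "\<Union>\<tau> = S" by (auto simp: \<tau>_def S_def)
  have fS: "finite S" using fZ by (simp add: S_def)
  have abZ: "a \<notin> Z" "b \<notin> Z" using Zb B(4) by auto
  have cS: "card S = m" using cZ abZ fZ B(4) m by (simp add: S_def)
  have part: "partition_on S \<tau>"
  proof -
    have dis: "disjnt {a,b} (\<Union>((\<lambda>y. {y}) ` Z))" using abZ by (auto simp: disjnt_def)
    have "S - {a,b} = Z" using abZ by (auto simp: S_def)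
    then show ?thesis unfolding \<tau>_def partition_on_insert[OF dis]
      using partition_on_singletons[of Z] by (auto simp: S_def)
  qed
  have sub: "subpartition \<tau> \<sigma>"
  proof (rule subpartition_intro)
    show "partition_on (\<Union>\<tau>) \<tau>" using part US by simp
    show "\<exists>D\<in>\<sigma>. T \<subseteq> D" if "T \<in> \<tau>" for T
      using that B zD K0s by (auto simp: \<tau>_def Z_def)
    show "T1 = T2" if H: "T1 \<in> \<tau>" "T2 \<in> \<tau>" "D \<in> \<sigma>" "T1 \<subseteq> D" "T2 \<subseteq> D" for T1 T2 D
    proof -
      have cl: "T = {a,b} \<and> D = B \<or> (\<exists>E\<in>K0. T = {z E} \<and> D = E)" if HT: "T \<in> \<tau>" "T \<subseteq> D" for T
      proof (cases "T = {a,b}")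
        case True
        then have "D = B" using blocks_eq[OF s, of D B a] HT B H(3) by auto
        then show ?thesis using True by simp
      next
        case False
        then obtain E where E: "E \<in> K0" "T = {z E}" using HT by (auto simp: \<tau>_def Z_def)
        then have "D = E" using blocks_eq[OF s, of D E "z E"] HT zD K0s H(3) by auto
        then show ?thesis using E by auto
      qed
      show ?thesis using cl[OF H(1,4)] cl[OF H(2,5)] K0s by auto
    qed
  qed
  have sa: "st_map S a = 1"
  proof -
    have "{y\<in>S. y < a} = {}" using Zb B(4) by (auto simp: S_def)
    then show ?thesis by (simp add: st_map_def)
  qed
  have sb: "st_map S b = 2"
  proof -
    have "{y\<in>S. y < b} = {a}" using Zb B(4) by (auto simp: S_def)
    then show ?thesis by (simp add: st_map_def)
  qed
  have SZ: "S - {a,b} = Z" using abZ by (auto simp: S_def)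
  have "st_map S ` (S - {a,b}) = st_map S ` S - st_map S ` {a,b}"
    by (rule inj_on_image_set_diff[OF st_map_inj[OF fS]]) (auto simp: S_def)
  then have "st_map S ` Z = st_map S ` S - st_map S ` {a,b}" by (simp only: SZ)
  also have "\<dots> = {3..m}" using st_map_image[OF fS] cS sa sb by auto
  finally have sZ: "st_map S ` Z = {3..m}" .
  have "st \<tau> = insert (st_map S ` {a,b}) ((\<lambda>y. {st_map S y}) ` Z)"
    unfolding st_def US by (simp add: \<tau>_def image_image)
  also have "\<dots> = insert {1,2} ((\<lambda>i. {i}) ` (st_map S ` Z))" using sa sb by (simp add: image_image)
  also have "\<dots> = pair_singletons_part m" using sZ by (simp add: pair_singletons_part_def)
  finally show ?thesis using sub by (auto simp: contains_def)
qed

lemma contains_pair: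
  assumes "\<sigma> \<in> set_partitions n" "m \<ge> 2"
  shows "contains \<sigma> (pair_singletons_part m) \<longleftrightarrow> bad m \<sigma>"
  using contains_pair_imp_bad[OF assms] bad_imp_contains_pair[OF assms] by blast

definition nm :: "nat set set \<Rightarrow> nat set" where
  "nm \<sigma> = {y. \<exists>B\<in>\<sigma>. y \<in> B \<and> (\<exists>x\<in>B. x < y)}"
definition phase1 :: "nat set set \<Rightarrow> bool" where
  "phase1 \<sigma> \<longleftrightarrow> nm \<sigma> \<noteq> {}"
definition bb :: "nat set set \<Rightarrow> nat" where
  "bb \<sigma> = Min (nm \<sigma>)"
definition act :: "nat set set \<Rightarrow> nat set set" where
  "act \<sigma> = {D\<in>\<sigma>. bb \<sigma> \<notin> D \<and> (\<exists>y\<in>D. bb \<sigma> < y)}"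
definition unt :: "nat set set \<Rightarrow> nat set set" where
  "unt \<sigma> = {D\<in>\<sigma>. bb \<sigma> \<notin> D \<and> \<not> (\<exists>y\<in>D. bb \<sigma> < y)}"
definition cc :: "nat set set \<Rightarrow> nat" where "cc \<sigma> = card (act \<sigma>)"
definition uu :: "nat set set \<Rightarrow> nat" where "uu \<sigma> = card (unt \<sigma>)"

lemma nm_sub: assumes "\<sigma> \<in> set_partitions n" shows "nm \<sigma> \<subseteq> {1..n}"
  using sp_sub[OF assms] by (auto simp: nm_def)

lemma fin_nm: "\<sigma> \<in> set_partitions n \<Longrightarrow> finite (nm \<sigma>)"
  using nm_sub finite_subset by blast

lemma bb_props:
  assumes "\<sigma> \<in> set_partitions n" "phase1 \<sigma>"
  shows "bb \<sigma> \<in> nm \<sigma>" "\<And>y. y \<in> nm \<sigma> \<Longrightarrow> bb \<sigma> \<le> y"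
  using assms fin_nm[OF assms(1)] by (auto simp: bb_def phase1_def)

lemma bad_iff:
  assumes s: "\<sigma> \<in> set_partitions n"
  shows "bad m \<sigma> \<longleftrightarrow> phase1 \<sigma> \<and> m - 2 \<le> cc \<sigma>"
proof
  assume "bad m \<sigma>"
  then obtain B a b where B: "B \<in> \<sigma>" "a \<in> B" "b \<in> B" "a < b"
    and K: "m - 2 \<le> card {D\<in>\<sigma>. D \<noteq> B \<and> (\<exists>y\<in>D. b < y)}" by (auto simp: bad_def)
  have bnm: "b \<in> nm \<sigma>" using B by (auto simp: nm_def)
  then have ph: "phase1 \<sigma>" by (auto simp: phase1_def)
  let ?b = "bb \<sigma>"
  have "?b \<in> nm \<sigma>" using bb_props[OF s ph] by simp
  then obtain B0 where B0: "B0 \<in> \<sigma>" "?b \<in> B0" by (auto simp: nm_def)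
  have bb_le: "?b \<le> b" using bb_props(2)[OF s ph bnm] .
  have fin: "finite (act \<sigma>)" using set_partitions_finite[OF s] by (simp add: act_def)
  have "card {D\<in>\<sigma>. D \<noteq> B \<and> (\<exists>y\<in>D. b < y)} \<le> cc \<sigma>"
  proof (cases "?b \<in> B")
    case True
    have "{D\<in>\<sigma>. D \<noteq> B \<and> (\<exists>y\<in>D. b < y)} \<subseteq> act \<sigma>"
      using blocks_eq[OF s] B True bb_le by (fastforce simp: act_def)
    then show ?thesis unfolding cc_def using fin by (rule card_mono[rotated])
  next
    case False
    have Bact: "B \<in> act \<sigma>" using False B bb_le by (auto simp: act_def le_less)
    have "{D\<in>\<sigma>. D \<noteq> B \<and> (\<exists>y\<in>D. b < y)} \<subseteq> insert B0 (act \<sigma> - {B})"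
      using blocks_eq[OF s] B0 bb_le by (fastforce simp: act_def)
    then have "card {D\<in>\<sigma>. D \<noteq> B \<and> (\<exists>y\<in>D. b < y)} \<le> card (insert B0 (act \<sigma> - {B}))"
      using fin by (intro card_mono) auto
    also have "\<dots> \<le> Suc (card (act \<sigma> - {B}))" by (simp add: card_insert_le_m1 card_insert_if)
    also have "\<dots> = cc \<sigma>" by (simp only: cc_def card_Suc_Diff1[OF fin Bact])
    finally show ?thesis .
  qed
  then show "phase1 \<sigma> \<and> m - 2 \<le> cc \<sigma>" using K ph by simp
next
  assume a: "phase1 \<sigma> \<and> m - 2 \<le> cc \<sigma>"
  let ?b = "bb \<sigma>"
  have "?b \<in> nm \<sigma>" using bb_props[OF s] a by simp
  then obtain B0 x where B0: "B0 \<in> \<sigma>" "?b \<in> B0" "x \<in> B0" "x < ?b" by (auto simp: nm_def)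
  have iff: "D \<noteq> B0 \<longleftrightarrow> ?b \<notin> D" if "D \<in> \<sigma>" for D
    using blocks_eq[OF s that B0(1) _ B0(2)] B0(2) by blast
  have "{D\<in>\<sigma>. D \<noteq> B0 \<and> (\<exists>y\<in>D. ?b < y)} = act \<sigma>"
    using iff by (auto simp: act_def)
  then have "m - 2 \<le> card {D\<in>\<sigma>. D \<noteq> B0 \<and> (\<exists>y\<in>D. ?b < y)}" using a by (simp add: cc_def)
  then show "bad m \<sigma>" unfolding bad_def using B0 by blast
qed

definition sing :: "nat \<Rightarrow> nat set set" where "sing n = (\<lambda>x. {x}) ` {1..n}"

lemma sing_part: "sing n \<in> set_partitions n"
  by (simp add: sing_def set_partitions_def partition_on_singletons)

lemma not_phase1_iff:
  assumes s: "\<sigma> \<in> set_partitions n"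
  shows "\<not> phase1 \<sigma> \<longleftrightarrow> \<sigma> = sing n"
proof
  assume np: "\<not> phase1 \<sigma>"
  have single: "B = {x}" if HB: "B \<in> \<sigma>" "x \<in> B" for B x
  proof (rule ccontr)
    assume "B \<noteq> {x}"
    then obtain y where "y \<in> B" "y \<noteq> x" using HB by blast
    then have "y \<in> nm \<sigma> \<or> x \<in> nm \<sigma>" using HB unfolding nm_def
      by (cases "x < y") (auto, metis linorder_neqE_nat)
    then have "nm \<sigma> \<noteq> {}" by auto
    then show False using np by (auto simp: phase1_def)
  qed
  have U: "\<Union>\<sigma> = {1..n}" using s by (simp add: sp_iff)
  show "\<sigma> = sing n"
  proof
    show "\<sigma> \<subseteq> sing n"
    proof
      fix B assume B: "B \<in> \<sigma>"
      then obtain x where x: "x \<in> B" using blocks_nonempty[OF s] by blast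
      then have "B = {x}" using single B by blast
      moreover have "x \<in> {1..n}" using U B x by blast
      ultimately show "B \<in> sing n" by (auto simp: sing_def)
    qed
    show "sing n \<subseteq> \<sigma>"
    proof
      fix B assume "B \<in> sing n"
      then obtain x where x: "x \<in> {1..n}" "B = {x}" by (auto simp: sing_def)
      then obtain B' where "B' \<in> \<sigma>" "x \<in> B'" using U by blast
      then show "B \<in> \<sigma>" using single x by blast
    qed
  qed
next
  assume "\<sigma> = sing n"
  then show "\<not> phase1 \<sigma>" by (auto simp: phase1_def nm_def sing_def)
qed

lemma card_sing: "card (sing n) = n"
  by (simp add: sing_def card_image inj_on_def)

lemma card_phase1:
  assumes s: "\<sigma> \<in> set_partitions n" and ph: "phase1 \<sigma>"
  shows "card \<sigma> = Suc (cc \<sigma> + uu \<sigma>)"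
proof -
  let ?b = "bb \<sigma>"
  have "?b \<in> nm \<sigma>" using bb_props[OF s ph] by simp
  then obtain B0 where B0: "B0 \<in> \<sigma>" "?b \<in> B0" by (auto simp: nm_def)
  have fin: "finite \<sigma>" using set_partitions_finite[OF s] .
  have eq: "\<sigma> = insert B0 (act \<sigma> \<union> unt \<sigma>)"
    using blocks_eq[OF s] B0 by (auto simp: act_def unt_def)
  have "B0 \<notin> act \<sigma> \<union> unt \<sigma>" using B0 by (auto simp: act_def unt_def)
  moreover have "act \<sigma> \<inter> unt \<sigma> = {}" by (auto simp: act_def unt_def)
  moreover have "finite (act \<sigma>)" "finite (unt \<sigma>)" using fin by (auto simp: act_def unt_def)
  ultimately have "card (insert B0 (act \<sigma> \<union> unt \<sigma>)) = Suc (cc \<sigma> + uu \<sigma>)"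
    by (simp add: card_Un_disjoint cc_def uu_def)
  then show ?thesis using eq by simp
qed

context
  fixes n :: nat and \<sigma> :: "nat set set"
  assumes s: "\<sigma> \<in> set_partitions n"
begin

lemma le_n: assumes "B \<in> \<sigma>" "y \<in> B" shows "y \<le> n"
  using sp_sub[OF s assms(1)] assms(2) by auto

lemma Sucn_notin: "B \<in> \<sigma> \<Longrightarrow> Suc n \<notin> B"
  using le_n by fastforce

lemma nm_E0: "nm (E0 n \<sigma>) = nm \<sigma>"
  by (auto simp: nm_def E0_def)

lemma nm_EC: assumes C: "C \<in> \<sigma>" shows "nm (EC n \<sigma> C) = insert (Suc n) (nm \<sigma>)"
proof
  show "nm (EC n \<sigma> C) \<subseteq> insert (Suc n) (nm \<sigma>)"
  proof
    fix y assume "y \<in> nm (EC n \<sigma> C)"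
    then obtain B x where B: "B \<in> EC n \<sigma> C" "y \<in> B" "x \<in> B" "x < y" by (auto simp: nm_def)
    show "y \<in> insert (Suc n) (nm \<sigma>)"
    proof (cases "B = insert (Suc n) C")
      case True
      show ?thesis
      proof (cases "y = Suc n")
        case False
        then have "y \<in> C" using B True by auto
        then have "x \<noteq> Suc n" using le_n[OF C] B(4) by fastforce
        then have "x \<in> C" using B True by auto
        note \<open>y \<in> C\<close> this
        then show ?thesis using C B(4) by (auto simp: nm_def)
      qed simp
    next
      case False
      then have "B \<in> \<sigma>" using B(1) by (auto simp: EC_def)
      then show ?thesis using B by (auto simp: nm_def)
    qed
  qed
  show "insert (Suc n) (nm \<sigma>) \<subseteq> nm (EC n \<sigma> C)"
  proof
    fix y assume y: "y \<in> insert (Suc n) (nm \<sigma>)"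
    show "y \<in> nm (EC n \<sigma> C)"
    proof (cases "y = Suc n")
      case True
      obtain x where "x \<in> C" using blocks_nonempty[OF s C] by blast
      moreover have "x < Suc n" using le_n[OF C \<open>x \<in> C\<close>] by simp
      ultimately show ?thesis using True by (auto simp: nm_def EC_def)
    next
      case False
      then obtain B x where B: "B \<in> \<sigma>" "y \<in> B" "x \<in> B" "x < y" using y by (auto simp: nm_def)
      show ?thesis
      proof (cases "B = C")
        case True then show ?thesis using B by (auto simp: nm_def EC_def)
      next
        case False then show ?thesis using B unfolding nm_def EC_def by blast
      qed
    qed
  qed
qed

lemma phase1_E0: "phase1 (E0 n \<sigma>) \<longleftrightarrow> phase1 \<sigma>"
  by (simp add: phase1_def nm_E0)

lemma phase1_EC: "C \<in> \<sigma> \<Longrightarrow> phase1 (EC n \<sigma> C)"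
  by (simp add: phase1_def nm_EC)

lemma bb_le_n: "phase1 \<sigma> \<Longrightarrow> bb \<sigma> \<le> n"
  using bb_props(1)[OF s] nm_sub[OF s] by fastforce

lemma bb_E0: "bb (E0 n \<sigma>) = bb \<sigma>"
  by (simp add: bb_def nm_E0)

lemma bb_EC: assumes "C \<in> \<sigma>" "phase1 \<sigma>" shows "bb (EC n \<sigma> C) = bb \<sigma>"
proof -
  have "bb (EC n \<sigma> C) = Min (insert (Suc n) (nm \<sigma>))" by (simp add: bb_def nm_EC[OF assms(1)])
  also have "\<dots> = min (Suc n) (Min (nm \<sigma>))"
    using fin_nm[OF s] assms(2) by (simp add: phase1_def Min_insert)
  also have "\<dots> = bb \<sigma>" using bb_le_n[OF assms(2)] by (simp add: bb_def)
  finally show ?thesis .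
qed

lemma bb_EC_np: assumes "C \<in> \<sigma>" "\<not> phase1 \<sigma>" shows "bb (EC n \<sigma> C) = Suc n"
  using assms by (simp add: bb_def nm_EC phase1_def)

lemma act_E0: assumes "phase1 \<sigma>" shows "act (E0 n \<sigma>) = insert {Suc n} (act \<sigma>)"
  unfolding act_def bb_E0 using bb_le_n[OF assms] by (auto simp: E0_def)

lemma unt_E0: assumes "phase1 \<sigma>" shows "unt (E0 n \<sigma>) = unt \<sigma>"
  unfolding unt_def bb_E0 using bb_le_n[OF assms] by (auto simp: E0_def)

lemma act_EC_in: assumes "C \<in> \<sigma>" "phase1 \<sigma>" "bb \<sigma> \<in> C" shows "act (EC n \<sigma> C) = act \<sigma>"
  unfolding act_def bb_EC[OF assms(1,2)] using assms by (auto simp: EC_def)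

lemma act_EC_out: assumes "C \<in> \<sigma>" "phase1 \<sigma>" "bb \<sigma> \<notin> C"
  shows "act (EC n \<sigma> C) = insert (insert (Suc n) C) (act \<sigma> - {C})"
  unfolding act_def bb_EC[OF assms(1,2)] using assms bb_le_n[OF assms(2)] by (auto simp: EC_def)

lemma unt_EC: assumes "C \<in> \<sigma>" "phase1 \<sigma>" shows "unt (EC n \<sigma> C) = unt \<sigma> - {C}"
  unfolding unt_def bb_EC[OF assms(1,2)] using assms bb_le_n[OF assms(2)] Sucn_notin[OF assms(1)] by (auto simp: EC_def)

lemma act_EC_np: assumes "C \<in> \<sigma>" "\<not> phase1 \<sigma>" shows "act (EC n \<sigma> C) = {}"
proof -
  have "\<not> Suc n < y" if "D \<in> EC n \<sigma> C" "y \<in> D" for D y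
  proof -
    have "D = insert (Suc n) C \<or> D \<in> \<sigma>" using that(1) by (auto simp: EC_def)
    then have "y \<le> Suc n" using le_n[OF assms(1)] le_n that(2) by fastforce
    then show ?thesis by simp
  qed
  then show ?thesis unfolding act_def bb_EC_np[OF assms] by blast
qed

lemma unt_EC_np: assumes "C \<in> \<sigma>" "\<not> phase1 \<sigma>" shows "unt (EC n \<sigma> C) = \<sigma> - {C}"
proof -
  have "\<not> Suc n < y" if "D \<in> EC n \<sigma> C" "y \<in> D" for D y
  proof -
    have "D = insert (Suc n) C \<or> D \<in> \<sigma>" using that(1) by (auto simp: EC_def)
    then have "y \<le> Suc n" using le_n[OF assms(1)] le_n that(2) by fastforce
    then show ?thesis by simp
  qed
  moreover have "Suc n \<notin> D" if "D \<in> \<sigma>" for D using Sucn_notin that .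
  ultimately show ?thesis unfolding unt_def bb_EC_np[OF assms] by (auto simp: EC_def)
qed

lemma fin_act: "finite (act \<sigma>)" and fin_unt: "finite (unt \<sigma>)"
  using set_partitions_finite[OF s] by (auto simp: act_def unt_def)

lemma cc_E0: assumes "phase1 \<sigma>" shows "cc (E0 n \<sigma>) = Suc (cc \<sigma>)"
proof -
  have "{Suc n} \<notin> act \<sigma>" using Sucn_notin by (auto simp: act_def)
  then show ?thesis using fin_act by (simp add: cc_def act_E0[OF assms])
qed

lemma uu_E0: assumes "phase1 \<sigma>" shows "uu (E0 n \<sigma>) = uu \<sigma>"
  by (simp add: uu_def unt_E0[OF assms])

lemma cc_EC: assumes C: "C \<in> \<sigma>" and ph: "phase1 \<sigma>"
  shows "cc (EC n \<sigma> C) = (if C \<in> unt \<sigma> then Suc (cc \<sigma>) else cc \<sigma>)"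
proof (cases "bb \<sigma> \<in> C")
  case True
  then have "C \<notin> unt \<sigma>" by (auto simp: unt_def)
  then show ?thesis using True by (simp add: cc_def act_EC_in[OF C ph True])
next
  case False
  have new: "insert (Suc n) C \<notin> act \<sigma>" using Sucn_notin by (auto simp: act_def)
  have "insert (Suc n) C \<notin> act \<sigma> - {C}" using new by simp
  then have e: "cc (EC n \<sigma> C) = Suc (card (act \<sigma> - {C}))"
    using fin_act by (simp add: cc_def act_EC_out[OF C ph False])
  show ?thesis
  proof (cases "C \<in> unt \<sigma>")
    case True
    then have "C \<notin> act \<sigma>" by (auto simp: act_def unt_def)
    then show ?thesis using e True by (simp add: cc_def)
  next
    case nu: False
    then have "C \<in> act \<sigma>" using C False by (auto simp: act_def unt_def)
    then show ?thesis using e nu by (simp only: cc_def card_Suc_Diff1[OF fin_act]) simp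
  qed
qed

lemma uu_EC: assumes C: "C \<in> \<sigma>" and ph: "phase1 \<sigma>"
  shows "uu (EC n \<sigma> C) = (if C \<in> unt \<sigma> then uu \<sigma> - 1 else uu \<sigma>)"
  using fin_unt by (simp add: uu_def unt_EC[OF C ph])

lemma cc_EC_np: assumes "C \<in> \<sigma>" "\<not> phase1 \<sigma>" shows "cc (EC n \<sigma> C) = 0"
  by (simp add: cc_def act_EC_np[OF assms])

lemma uu_EC_np: assumes "C \<in> \<sigma>" "\<not> phase1 \<sigma>" shows "uu (EC n \<sigma> C) = n - 1"
proof -
  have "\<sigma> = sing n" using not_phase1_iff[OF s] assms(2) by simp
  then have "card \<sigma> = n" by (simp add: card_sing)
  then show ?thesis using assms(1) set_partitions_finite[OF s] by (simp add: uu_def unt_EC_np[OF assms])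
qed

end

definition hh :: "nat \<Rightarrow> nat \<Rightarrow> nat set set \<Rightarrow> real" where
  "hh i c \<sigma> = (if phase1 \<sigma> \<and> cc \<sigma> = c then ffact (uu \<sigma>) i else 0)"

definition mom :: "nat \<Rightarrow> nat \<Rightarrow> nat \<Rightarrow> real" where
  "mom i c n = (\<Sum>\<sigma>\<in>set_partitions n. hh i c \<sigma>)"

lemma per_sigma:
  assumes s: "\<sigma> \<in> set_partitions n"
  shows "hh i c (E0 n \<sigma>) + (\<Sum>C\<in>\<sigma>. hh i c (EC n \<sigma> C)) =
    (1 + real c) * hh i c \<sigma> + (if c = 0 then (if phase1 \<sigma> then 0 else ffact n (Suc i))
                                 else hh i (c - 1) \<sigma> + hh (Suc i) (c - 1) \<sigma>)"
proof (cases "phase1 \<sigma>")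
  case True
  define c' where "c' = cc \<sigma>"
  define u' where "u' = uu \<sigma>"
  have fin: "finite \<sigma>" using set_partitions_finite[OF s] .
  have e0: "hh i c (E0 n \<sigma>) = (if Suc c' = c then ffact u' i else 0)"
    using True by (simp add: hh_def phase1_E0[OF s] cc_E0[OF s] uu_E0[OF s] c'_def u'_def)
  have eC: "hh i c (EC n \<sigma> C) = (if C \<in> unt \<sigma> then (if Suc c' = c then ffact (u' - 1) i else 0)
                                   else (if c' = c then ffact u' i else 0))" if "C \<in> \<sigma>" for C
    using True that by (simp add: hh_def phase1_EC[OF s] cc_EC[OF s] uu_EC[OF s] c'_def u'_def)
  have "(\<Sum>C\<in>\<sigma>. hh i c (EC n \<sigma> C)) = (\<Sum>C\<in>\<sigma>. (if C \<in> unt \<sigma> then (if Suc c' = c then ffact (u' - 1) i else 0)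
                                   else (if c' = c then ffact u' i else 0)))"
    by (rule sum.cong) (auto simp: eC)
  also have "\<dots> = (\<Sum>C\<in>\<sigma> \<inter> {C. C \<in> unt \<sigma>}. (if Suc c' = c then ffact (u' - 1) i else 0))
       + (\<Sum>C\<in>\<sigma> \<inter> - {C. C \<in> unt \<sigma>}. (if c' = c then ffact u' i else 0))"
    by (rule sum.If_cases[OF fin])
  also have "\<sigma> \<inter> {C. C \<in> unt \<sigma>} = unt \<sigma>" by (auto simp: unt_def)
  also have "card (\<sigma> \<inter> - {C. C \<in> unt \<sigma>}) = Suc c'"
  proof -
    have "\<sigma> \<inter> - {C. C \<in> unt \<sigma>} = \<sigma> - unt \<sigma>" by auto
    moreover have "card (\<sigma> - unt \<sigma>) = card \<sigma> - card (unt \<sigma>)"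
      using fin by (intro card_Diff_subset) (auto simp: unt_def intro: finite_subset)
    ultimately show ?thesis using card_phase1[OF s True] by (simp add: c'_def uu_def)
  qed
  then have "(\<Sum>C\<in>\<sigma> \<inter> - {C. C \<in> unt \<sigma>}. (if c' = c then ffact u' i else 0)) = real (Suc c') * (if c' = c then ffact u' i else 0)"
    by simp
  finally have sC: "(\<Sum>C\<in>\<sigma>. hh i c (EC n \<sigma> C)) = real u' * (if Suc c' = c then ffact (u' - 1) i else 0)
     + real (Suc c') * (if c' = c then ffact u' i else 0)" by (simp add: u'_def uu_def)
  have hs: "hh j d \<sigma> = (if c' = d then ffact u' j else 0)" for j d
    using True by (simp add: hh_def c'_def u'_def)
  have fl: "real u' * ffact (u' - 1) i = ffact u' (Suc i)" by (simp add: ffact_Suc_left)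
  show ?thesis
    unfolding e0 sC hs using True fl
    by (cases c) (auto simp: algebra_simps)
next
  case False
  have sg: "\<sigma> = sing n" using not_phase1_iff[OF s] False by simp
  have cs: "card \<sigma> = n" using sg card_sing by simp
  have e0: "hh i c (E0 n \<sigma>) = 0" using False by (simp add: hh_def phase1_E0[OF s])
  have "(\<Sum>C\<in>\<sigma>. hh i c (EC n \<sigma> C)) = (\<Sum>C\<in>\<sigma>. (if c = 0 then ffact (n - 1) i else 0))"
    by (rule sum.cong) (auto simp: hh_def phase1_EC[OF s] cc_EC_np[OF s _ False] uu_EC_np[OF s _ False])
  also have "\<dots> = real n * (if c = 0 then ffact (n - 1) i else 0)" using cs by simp
  also have "\<dots> = (if c = 0 then ffact n (Suc i) else 0)" by (simp add: ffact_Suc_left)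
  finally show ?thesis using e0 False by (simp add: hh_def)
qed

lemma sum_nonphase1:
  "(\<Sum>\<sigma>\<in>set_partitions n. (if phase1 \<sigma> then 0 else x)) = (x::real)"
proof -
  have "(\<Sum>\<sigma>\<in>set_partitions n. (if phase1 \<sigma> then 0 else x)) = (\<Sum>\<sigma>\<in>set_partitions n. (if \<sigma> = sing n then x else 0))"
    by (rule sum.cong) (auto simp: not_phase1_iff[symmetric])
  also have "\<dots> = x" using finite_set_partitions sing_part by (simp add: sum.delta)
  finally show ?thesis .
qed

lemma mom_rec:
  "mom i c (Suc n) = (1 + real c) * mom i c n +
     (if c = 0 then ffact n (Suc i) else mom i (c - 1) n + mom (Suc i) (c - 1) n)"
proof -
  have "mom i c (Suc n) = (\<Sum>\<sigma>\<in>set_partitions n. hh i c (E0 n \<sigma>) + (\<Sum>C\<in>\<sigma>. hh i c (EC n \<sigma> C)))"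
    unfolding mom_def by (rule sum_ext)
  also have "\<dots> = (\<Sum>\<sigma>\<in>set_partitions n. (1 + real c) * hh i c \<sigma> + (if c = 0 then (if phase1 \<sigma> then 0 else ffact n (Suc i))
                                 else hh i (c - 1) \<sigma> + hh (Suc i) (c - 1) \<sigma>))"
    by (rule sum.cong[OF refl]) (rule per_sigma)
  also have "\<dots> = (1 + real c) * mom i c n +
     (if c = 0 then ffact n (Suc i) else mom i (c - 1) n + mom (Suc i) (c - 1) n)"
    by (cases "c = 0") (simp_all add: sum.distrib sum_distrib_left mom_def sum_nonphase1)
  finally show ?thesis .
qed

lemma cfin_mom: "cfin (mom i c)"
proof (induction c arbitrary: i)
  case 0
  show ?case by (rule cfin_solve[OF cfin_ffact[of "Suc i"], of _ 1]) (simp add: mom_rec)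
next
  case (Suc c)
  show ?case
    by (rule cfin_solve[OF cfin_add[OF Suc[of i] Suc[of "Suc i"]], of _ "1 + real (Suc c)"]) (simp add: mom_rec)
qed

lemma cfin_const: "cfin (\<lambda>n. x)"
  by (rule cfin_solve[OF cfin_zero, of _ 1]) simp

lemma pair_count:
  assumes m: "m \<ge> 2"
  shows "real (card (avoiders n (pair_singletons_part m))) = 1 + (\<Sum>c<m - 2. mom 0 c n)"
proof -
  have "avoiders n (pair_singletons_part m) = {\<sigma>\<in>set_partitions n. \<not> phase1 \<sigma> \<or> cc \<sigma> < m - 2}"
    unfolding avoiders_def using contains_pair[OF _ m] bad_iff by auto
  then have "real (card (avoiders n (pair_singletons_part m))) =
      (\<Sum>\<sigma>\<in>set_partitions n. if \<not> phase1 \<sigma> \<or> cc \<sigma> < m - 2 then 1 else 0)"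
    using finite_set_partitions by (simp add: card_filter_sum)
  also have "\<dots> = (\<Sum>\<sigma>\<in>set_partitions n. (if phase1 \<sigma> then 0 else 1) + (\<Sum>c<m - 2. hh 0 c \<sigma>))"
  proof (rule sum.cong[OF refl])
    fix \<sigma> assume s: "\<sigma> \<in> set_partitions n"
    show "(if \<not> phase1 \<sigma> \<or> cc \<sigma> < m - 2 then 1 else 0) = (if phase1 \<sigma> then 0 else 1) + (\<Sum>c<m - 2. hh 0 c \<sigma>)"
    proof (cases "phase1 \<sigma>")
      case True
      have "(\<Sum>c<m - 2. hh 0 c \<sigma>) = (\<Sum>c<m - 2. if cc \<sigma> = c then 1 else 0)"
        using True by (simp add: hh_def)
      also have "\<dots> = (if cc \<sigma> < m - 2 then 1 else 0)" by (simp add: sum.delta')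
      finally show ?thesis using True by simp
    next
      case False then show ?thesis by (simp add: hh_def)
    qed
  qed
  also have "\<dots> = 1 + (\<Sum>c<m - 2. mom 0 c n)"
    by (simp add: sum.distrib sum_nonphase1 mom_def sum.swap[of _ "{..<m - 2}"])
  finally show ?thesis .
qed

lemma pair_Prec:
  assumes m: "m \<ge> 2"
  shows "P_recursive (\<lambda>n. real (card (avoiders n (pair_singletons_part m))))"
  unfolding pair_count[OF m]
  by (rule cfin_P_recursive, rule cfin_add[OF cfin_const], rule cfin_sum, rule cfin_mom)

definition ncv :: "nat set set \<Rightarrow> bool" where
  "ncv \<sigma> \<longleftrightarrow> (\<exists>B\<in>\<sigma>. \<exists>x\<in>B. \<exists>z\<in>B. \<exists>y. x < y \<and> y < z \<and> y \<in> \<Union>\<sigma> \<and> y \<notin> B)"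

lemma ncvI: "B \<in> \<rho> \<Longrightarrow> x \<in> B \<Longrightarrow> z \<in> B \<Longrightarrow> x < y \<Longrightarrow> y < z \<Longrightarrow> y \<in> \<Union>\<rho> \<Longrightarrow> y \<notin> B \<Longrightarrow> ncv \<rho>"
  unfolding ncv_def by blast

lemma st_map_3:
  assumes "x < y" "y < z"
  shows "st_map {x,y,z} x = 1" "st_map {x,y,z} y = 2" "st_map {x,y,z} z = 3"
proof -
  have "{w\<in>{x,y,z}. w < x} = {}" using assms by auto
  then show "st_map {x,y,z} x = 1" by (simp add: st_map_def)
  have "{w\<in>{x,y,z}. w < y} = {x}" using assms by auto
  then show "st_map {x,y,z} y = 2" by (simp add: st_map_def)
  have "{w\<in>{x,y,z}. w < z} = {x,y}" using assms by auto
  then show "st_map {x,y,z} z = 3" using assms by (simp add: st_map_def)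
qed

lemma contains_132:
  assumes s: "\<sigma> \<in> set_partitions n"
  shows "contains \<sigma> {{1,3},{2}} \<longleftrightarrow> ncv \<sigma>"
proof
  assume "contains \<sigma> {{1,3},{2}}"
  then obtain \<tau> where t: "subpartition \<tau> \<sigma>" "st \<tau> = {{1,3},{2}}" by (auto simp: contains_def)
  define S where "S = \<Union>\<tau>"
  have fS: "finite S" using subpartition_props(2)[OF t(1) s] by (simp add: S_def)
  obtain f where f: "\<forall>B\<in>\<tau>. f B \<in> \<sigma> \<and> B \<subseteq> f B" "inj_on f \<tau>" using t(1) by (auto simp: subpartition_def)
  have "{1,3} \<in> st \<tau>" "{2} \<in> st \<tau>" using t(2) by auto
  then obtain T1 T2 where T: "T1 \<in> \<tau>" "st_map S ` T1 = {1,3}" "T2 \<in> \<tau>" "st_map S ` T2 = {2}"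
    by (auto simp: st_def S_def)
  obtain x where x: "x \<in> T1" "st_map S x = 1" using T(2) by (metis imageE insertI1)
  obtain z where z: "z \<in> T1" "st_map S z = 3" using T(2) by (metis imageE insertI1 insert_commute)
  obtain y where y: "y \<in> T2" "st_map S y = 2" using T(4) by (metis imageE insertI1)
  have inS: "x \<in> S" "y \<in> S" "z \<in> S" using x y z T by (auto simp: S_def)
  have xy: "x < y" using st_map_less_iff[OF fS inS(1,2)] x y by simp
  have yz: "y < z" using st_map_less_iff[OF fS inS(2,3)] z y by simp
  have "T1 \<noteq> T2" using T by auto
  then have "f T1 \<noteq> f T2" using f(2) T by (auto simp: inj_on_def)
  moreover have "f T1 \<in> \<sigma>" "f T2 \<in> \<sigma>" "x \<in> f T1" "z \<in> f T1" "y \<in> f T2" using f T x y z by auto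
  ultimately have "y \<notin> f T1" using blocks_eq[OF s] by metis
  then show "ncv \<sigma>" unfolding ncv_def
    using \<open>f T1 \<in> \<sigma>\<close> \<open>x \<in> f T1\<close> \<open>z \<in> f T1\<close> \<open>f T2 \<in> \<sigma>\<close> \<open>y \<in> f T2\<close> xy yz by blast
next
  assume "ncv \<sigma>"
  then obtain B x z y where B: "B \<in> \<sigma>" "x \<in> B" "z \<in> B" "x < y" "y < z" "y \<in> \<Union>\<sigma>" "y \<notin> B"
    unfolding ncv_def by blast
  then obtain D where D: "D \<in> \<sigma>" "y \<in> D" by blast
  have DB: "D \<noteq> B" using D B by auto
  define \<tau> where "\<tau> = {{x,z},{y}}"
  have U: "\<Union>\<tau> = {x,y,z}" by (auto simp: \<tau>_def)
  have sub: "subpartition \<tau> \<sigma>"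
  proof (rule subpartition_intro)
    show "partition_on (\<Union>\<tau>) \<tau>" using B(4,5)
      by (auto simp: partition_on_def disjoint_def \<tau>_def)
    show "\<exists>D\<in>\<sigma>. T \<subseteq> D" if "T \<in> \<tau>" for T using that B D by (auto simp: \<tau>_def)
    show "T1 = T2" if H: "T1 \<in> \<tau>" "T2 \<in> \<tau>" "E \<in> \<sigma>" "T1 \<subseteq> E" "T2 \<subseteq> E" for T1 T2 E
    proof -
      have c: "(T = {x,z} \<and> E = B) \<or> (T = {y} \<and> E = D)" if "T \<in> \<tau>" "T \<subseteq> E" for T
        using that blocks_eq[OF s H(3) B(1), of x] blocks_eq[OF s H(3) D(1), of y] B D
        by (auto simp: \<tau>_def)
      show ?thesis using c[OF H(1,4)] c[OF H(2,5)] DB by auto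
    qed
  qed
  have "st \<tau> = {{1,3},{2}}"
    unfolding st_def U using st_map_3[OF B(4,5)] by (simp add: \<tau>_def)
  then show "contains \<sigma> {{1,3},{2}}" using sub by (auto simp: contains_def)
qed

lemma ncv_E0: assumes s: "\<sigma> \<in> set_partitions n" shows "ncv (E0 n \<sigma>) \<longleftrightarrow> ncv \<sigma>"
proof -
  have le: "y \<le> n" if "B \<in> \<sigma>" "y \<in> B" for B y using sp_sub[OF s that(1)] that(2) by auto
  show ?thesis
  proof
    assume "ncv (E0 n \<sigma>)"
    then obtain B x z y where B: "B \<in> E0 n \<sigma>" "x \<in> B" "z \<in> B" "x < y" "y < z" "y \<in> \<Union>(E0 n \<sigma>)" "y \<notin> B"
      unfolding ncv_def by blast
    have "B \<noteq> {Suc n}" using B by auto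
    then have "B \<in> \<sigma>" using B(1) by (auto simp: E0_def)
    then have "y \<noteq> Suc n" using le B(3,5) by fastforce
    then have "y \<in> \<Union>\<sigma>" using B(6) by (auto simp: E0_def)
    then show "ncv \<sigma>" using ncvI[OF \<open>B \<in> \<sigma>\<close> B(2,3,4,5) _ B(7)] by blast
  next
    assume "ncv \<sigma>"
    then show "ncv (E0 n \<sigma>)" unfolding ncv_def E0_def by blast
  qed
qed

lemma ncv_EC:
  assumes s: "\<sigma> \<in> set_partitions n" and C: "C \<in> \<sigma>"
  shows "ncv (EC n \<sigma> C) \<longleftrightarrow> ncv \<sigma> \<or> n \<notin> C"
proof -
  have le: "y \<le> n" if "B \<in> \<sigma>" "y \<in> B" for B y using sp_sub[OF s that(1)] that(2) by auto
  have ge: "1 \<le> y" if "B \<in> \<sigma>" "y \<in> B" for B y using sp_sub[OF s that(1)] that(2) by auto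
  have U: "\<Union>\<sigma> = {1..n}" using s by (simp add: sp_iff)
  have UE: "\<Union>(EC n \<sigma> C) = {1..Suc n}" using EC_part[OF s C] by (simp add: sp_iff)
  show ?thesis
  proof
    assume "ncv (EC n \<sigma> C)"
    then obtain B x z y where B: "B \<in> EC n \<sigma> C" "x \<in> B" "z \<in> B" "x < y" "y < z" "y \<in> \<Union>(EC n \<sigma> C)" "y \<notin> B"
      unfolding ncv_def by blast
    show "ncv \<sigma> \<or> n \<notin> C"
    proof (rule disjCI)
      assume nC: "\<not> n \<notin> C"
      have yU: "y \<in> \<Union>\<sigma>" if "y \<le> n" using B(4,6) that U UE by auto
      show "ncv \<sigma>"
      proof (cases "B = insert (Suc n) C")
        case False
        then have Bs: "B \<in> \<sigma>" using B(1) by (auto simp: EC_def)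
        then have "y \<le> n" using le B(3,5) by fastforce
        then show ?thesis using ncvI[OF Bs B(2,3,4,5) _ B(7)] yU by blast
      next
        case True
        have zle: "z \<le> Suc n" using B(3) True le C by fastforce
        have "x \<noteq> Suc n" using B(4,5) zle by simp
        then have xC: "x \<in> C" using B(2) True by auto
        show ?thesis
        proof (cases "z = Suc n")
          case False
          then have "z \<in> C" using B(3) True by auto
          moreover have "y \<notin> C" using B(7) True by auto
          moreover have "y \<le> n" using le[OF C \<open>z \<in> C\<close>] B(5) by simp
          ultimately show ?thesis using ncvI[OF C xC _ B(4,5)] yU by blast
        next
          case zs: True
          have "y \<notin> C" using B(7) True by auto
          then have "y \<noteq> n" using nC by auto
          then have "y < n" using B(5) zs by simp
          moreover have "n \<in> C" using nC by simp
          ultimately show ?thesis using ncvI[OF C xC _ B(4)] \<open>y \<notin> C\<close> yU by simp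
        qed
      qed
    qed
  next
    assume "ncv \<sigma> \<or> n \<notin> C"
    then show "ncv (EC n \<sigma> C)"
    proof
      assume "ncv \<sigma>"
      then obtain B x z y where B: "B \<in> \<sigma>" "x \<in> B" "z \<in> B" "x < y" "y < z" "y \<in> \<Union>\<sigma>" "y \<notin> B"
        unfolding ncv_def by blast
      have "y \<le> n" using le B(1,3,5) by fastforce
      then have yE: "y \<in> \<Union>(EC n \<sigma> C)" using B(6) U UE by auto
      show ?thesis
      proof (cases "B = C")
        case True
        have "y \<notin> insert (Suc n) C" using B(7) True \<open>y \<le> n\<close> by auto
        moreover have "insert (Suc n) C \<in> EC n \<sigma> C" by (simp add: EC_def)
        ultimately show ?thesis using ncvI[of "insert (Suc n) C" _ x z y] B True yE by blast
      next
        case False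
        then have "B \<in> EC n \<sigma> C" using B(1) by (simp add: EC_def)
        then show ?thesis using ncvI[of B _ x z y] B yE by blast
      qed
    next
      assume nC: "n \<notin> C"
      obtain x where x: "x \<in> C" using blocks_nonempty[OF s C] by blast
      have "x \<le> n" "1 \<le> x" using le[OF C x] ge[OF C x] by auto
      then have xn: "x < n" using nC x by (cases "x = n") auto
      have "n \<in> \<Union>(EC n \<sigma> C)" using UE xn by auto
      moreover have "insert (Suc n) C \<in> EC n \<sigma> C" by (simp add: EC_def)
      moreover have "n \<notin> insert (Suc n) C" using nC by auto
      ultimately show ?thesis using x xn by (intro ncvI[of "insert (Suc n) C" _ x "Suc n" n]) auto
    qed
  qed
qed

definition cvc :: "nat \<Rightarrow> real" where
  "cvc n = (\<Sum>\<sigma>\<in>set_partitions n. if ncv \<sigma> then 0 else 1)"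

lemma cvc_rec: "cvc (Suc n) = (if n = 0 then 1 else 2) * cvc n"
proof -
  have "cvc (Suc n) = (\<Sum>\<sigma>\<in>set_partitions n. (if ncv (E0 n \<sigma>) then 0 else 1) + (\<Sum>C\<in>\<sigma>. if ncv (EC n \<sigma> C) then 0 else 1))"
    unfolding cvc_def by (rule sum_ext)
  also have "\<dots> = (\<Sum>\<sigma>\<in>set_partitions n. (if n = 0 then 1 else 2) * (if ncv \<sigma> then 0 else 1))"
  proof (rule sum.cong[OF refl])
    fix \<sigma> assume s: "\<sigma> \<in> set_partitions n"
    have "(\<Sum>C\<in>\<sigma>. if ncv (EC n \<sigma> C) then 0 else 1) = (\<Sum>C\<in>\<sigma>. if n \<in> C then (if ncv \<sigma> then 0 else 1) else (0::real))"
      by (rule sum.cong) (auto simp: ncv_EC[OF s])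
    also have "\<dots> = (if n = 0 then 0 else (if ncv \<sigma> then 0 else 1))"
    proof (cases "n = 0")
      case True
      then have "\<sigma> = {}" using s by (simp add: set_partitions_def partition_on_empty)
      then show ?thesis using True by simp
    next
      case False
      then have "n \<in> \<Union>\<sigma>" using s by (simp add: sp_iff)
      then obtain Cn where Cn: "Cn \<in> \<sigma>" "n \<in> Cn" by blast
      have "(\<Sum>C\<in>\<sigma>. if n \<in> C then (if ncv \<sigma> then 0 else 1) else (0::real)) =
            (\<Sum>C\<in>\<sigma>. if C = Cn then (if ncv \<sigma> then 0 else 1) else (0::real))"
      proof (rule sum.cong[OF refl])
        fix C assume C: "C \<in> \<sigma>"
        have "n \<in> C \<longleftrightarrow> C = Cn" using blocks_eq[OF s C Cn(1) _ Cn(2)] Cn(2) by blast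
        then show "(if n \<in> C then (if ncv \<sigma> then 0 else 1) else (0::real)) =
            (if C = Cn then (if ncv \<sigma> then 0 else 1) else (0::real))" by simp
      qed
      also have "\<dots> = (if ncv \<sigma> then 0 else 1)" using Cn set_partitions_finite[OF s] by (simp add: sum.delta)
      finally show ?thesis using False by simp
    qed
    finally show "(if ncv (E0 n \<sigma>) then 0 else 1) + (\<Sum>C\<in>\<sigma>. if ncv (EC n \<sigma> C) then 0 else 1) =
       (if n = 0 then 1 else 2) * (if ncv \<sigma> then 0 else (1::real))"
      by (simp add: ncv_E0[OF s])
  qed
  also have "\<dots> = (if n = 0 then 1 else 2) * cvc n" by (simp add: cvc_def sum_distrib_left)
  finally show ?thesis .
qed

lemma Prec_132: "P_recursive (\<lambda>n. real (card (avoiders n {{1,3},{2}})))"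
proof -
  have e: "(\<lambda>n. real (card (avoiders n {{1,3},{2}}))) = cvc"
  proof
    fix n
    have "avoiders n {{1,3},{2}} = {\<sigma>\<in>set_partitions n. \<not> ncv \<sigma>}"
      unfolding avoiders_def using contains_132 by auto
    then show "real (card (avoiders n {{1,3},{2}})) = cvc n"
      using finite_set_partitions by (simp add: card_filter_sum cvc_def if_not_P) (rule sum.cong, auto)
  qed
  have "app [:0, -2, 1:] cvc n = 0" for n
    by (simp add: app_pCons cvc_rec)
  then have "cfin cvc" unfolding cfin_def by (intro exI[of _ "[:0, -2, 1:]"]) simp
  then show ?thesis unfolding e by (rule cfin_P_recursive)
qed

definition rv :: "nat \<Rightarrow> nat \<Rightarrow> nat" where "rv N x = Suc N - x"
definition revp :: "nat \<Rightarrow> nat set set \<Rightarrow> nat set set" where "revp N \<rho> = (`) (rv N) ` \<rho>"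

lemma rv_rv: "x \<le> Suc N \<Longrightarrow> rv N (rv N x) = x" by (simp add: rv_def)

lemma rv_inj: assumes "\<And>x. x \<in> A \<Longrightarrow> x \<le> N" shows "inj_on (rv N) A"
proof (rule inj_onI)
  fix x y assume "x \<in> A" "y \<in> A" "rv N x = rv N y"
  then show "x = y" using assms[of x] assms[of y] by (simp add: rv_def)
qed

lemma rv_img_img: "B \<subseteq> {1..N} \<Longrightarrow> rv N ` (rv N ` B) = B"
proof -
  assume B: "B \<subseteq> {1..N}"
  have "rv N ` (rv N ` B) = (\<lambda>x. rv N (rv N x)) ` B" by (simp add: image_image)
  also have "\<dots> = (\<lambda>x. x) ` B" by (rule image_cong[OF refl]) (use B in \<open>auto simp: rv_rv\<close>)
  finally show ?thesis by simp
qed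

lemma rv_interval: "rv N ` {1..N} = {1..N}"
proof
  show "rv N ` {1..N} \<subseteq> {1..N}" by (auto simp: rv_def)
  show "{1..N} \<subseteq> rv N ` {1..N}"
  proof
    fix x assume x: "x \<in> {1..N}"
    then have "x = rv N (rv N x)" by (simp add: rv_rv)
    moreover have "rv N x \<in> {1..N}" using x by (auto simp: rv_def)
    ultimately show "x \<in> rv N ` {1..N}" by blast
  qed
qed

lemma revp_part: assumes s: "\<sigma> \<in> set_partitions n" shows "revp n \<sigma> \<in> set_partitions n"
proof -
  have "partition_on (rv n ` {1..n}) ((`) (rv n) ` \<sigma> - {{}})"
    using s by (intro partition_on_inj_image) (auto simp: set_partitions_def intro: rv_inj)
  moreover have "{} \<notin> (`) (rv n) ` \<sigma>" using blocks_nonempty[OF s] by auto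
  then have e1: "(`) (rv n) ` \<sigma> - {{}} = (`) (rv n) ` \<sigma>" by blast
  ultimately show ?thesis unfolding e1 rv_interval revp_def set_partitions_def by simp
qed

lemma revp_revp: assumes "\<And>B. B \<in> \<rho> \<Longrightarrow> B \<subseteq> {1..N}" shows "revp N (revp N \<rho>) = \<rho>"
proof -
  have "revp N (revp N \<rho>) = (\<lambda>B. rv N ` (rv N ` B)) ` \<rho>" by (simp add: revp_def image_image)
  also have "\<dots> = (\<lambda>B. B) ` \<rho>" by (rule image_cong[OF refl]) (rule rv_img_img[OF assms])
  finally show ?thesis by simp
qed

lemma st_map_rv:
  assumes fS: "finite S" and SN: "S \<subseteq> {1..N}" and x: "x \<in> S"
  shows "st_map (rv N ` S) (rv N x) = Suc (card S) - st_map S x"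
proof -
  have le: "w \<le> N" if "w \<in> S" for w using SN that by auto
  have le': "\<forall>w\<in>S. w \<le> N" using le by blast
  have "{y \<in> rv N ` S. y < rv N x} = rv N ` {w\<in>S. x < w}"
    using le' x by (auto simp: rv_def)
  have c1: "card {y \<in> rv N ` S. y < rv N x} = card {w\<in>S. x < w}"
  proof -
    have "inj_on (rv N) {w\<in>S. x < w}" by (rule rv_inj) (use le in auto)
    then show ?thesis using \<open>{y \<in> rv N ` S. y < rv N x} = rv N ` {w\<in>S. x < w}\<close> by (simp add: card_image)
  qed
  have dec: "S = insert x ({w\<in>S. w < x} \<union> {w\<in>S. x < w})" using x by auto
  have "card S = Suc (card {w\<in>S. w < x} + card {w\<in>S. x < w})"
    by (subst dec) (use fS in \<open>simp add: card_Un_disjoint disjoint_iff\<close>)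
  then show ?thesis using c1 by (simp add: st_map_def)
qed

lemma st_revp:
  assumes fS: "finite (\<Union>\<tau>)" and SN: "\<Union>\<tau> \<subseteq> {1..N}"
  shows "st (revp N \<tau>) = revp (card (\<Union>\<tau>)) (st \<tau>)"
proof -
  define S where "S = \<Union>\<tau>"
  have U: "\<Union>(revp N \<tau>) = rv N ` S" by (auto simp: revp_def S_def)
  have "st (revp N \<tau>) = (\<lambda>T. st_map (rv N ` S) ` (rv N ` T)) ` \<tau>"
    unfolding st_def U by (simp add: revp_def image_image)
  also have "\<dots> = (\<lambda>T. rv (card S) ` (st_map S ` T)) ` \<tau>"
  proof (rule image_cong[OF refl])
    fix T assume T: "T \<in> \<tau>"
    have "st_map (rv N ` S) ` (rv N ` T) = (\<lambda>x. st_map (rv N ` S) (rv N x)) ` T" by (simp add: image_image)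
    also have "\<dots> = (\<lambda>x. rv (card S) (st_map S x)) ` T"
    proof (rule image_cong[OF refl])
      fix x assume "x \<in> T"
      then have "x \<in> S" using T by (auto simp: S_def)
      then show "st_map (rv N ` S) (rv N x) = rv (card S) (st_map S x)"
        using st_map_rv[of S N x] fS SN by (simp add: S_def rv_def)
    qed
    also have "\<dots> = rv (card S) ` (st_map S ` T)" by (simp add: image_image)
    finally show "st_map (rv N ` S) ` (rv N ` T) = rv (card S) ` (st_map S ` T)" .
  qed
  also have "\<dots> = revp (card S) (st \<tau>)" by (simp add: revp_def st_def S_def image_image)
  finally show ?thesis by (simp add: S_def)
qed

lemma contains_rev:
  assumes s: "\<sigma> \<in> set_partitions n" and c: "contains \<sigma> \<pi>"
  shows "contains (revp n \<sigma>) (revp (card (\<Union>\<pi>)) \<pi>)"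
proof -
  obtain \<tau> where t: "subpartition \<tau> \<sigma>" "st \<tau> = \<pi>" using c by (auto simp: contains_def)
  define S where "S = \<Union>\<tau>"
  have fS: "finite S" using subpartition_props(2)[OF t(1) s] by (simp add: S_def)
  have SN: "S \<subseteq> {1..n}" using subpartition_props(1)[OF t(1) s] by (simp add: S_def)
  have ne: "{} \<notin> \<tau>" using subpartition_props(4)[OF t(1) s] .
  obtain f where f: "\<forall>B\<in>\<tau>. f B \<in> \<sigma> \<and> B \<subseteq> f B" "inj_on f \<tau>" using t(1) by (auto simp: subpartition_def)
  have cU: "card (\<Union>\<pi>) = card S"
  proof -
    have "\<Union>\<pi> = st_map S ` S" using Union_st[of \<tau>] t(2) by (simp add: S_def)
    then show ?thesis using st_map_inj[OF fS] by (simp add: card_image)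
  qed
  have TN: "T \<subseteq> {1..n}" if "T \<in> \<tau>" for T using that SN by (auto simp: S_def)
  have uniq: "D = f T" if HT: "T \<in> \<tau>" "D \<in> \<sigma>" "T \<subseteq> D" for T D
  proof -
    have "T \<noteq> {}" using ne HT(1) by metis
    then obtain x where "x \<in> T" by blast
    then show ?thesis using blocks_eq[OF s HT(2), of "f T" x] f HT by auto
  qed
  have sub: "subpartition (revp n \<tau>) (revp n \<sigma>)"
  proof (rule subpartition_intro)
    have "partition_on (\<Union>\<tau>) \<tau>" using t(1) by (simp add: subpartition_def)
    then have "partition_on (rv n ` S) ((`) (rv n) ` \<tau> - {{}})"
      unfolding S_def by (rule partition_on_inj_image) (rule rv_inj, use SN in \<open>auto simp: S_def\<close>)
    moreover have "{} \<notin> (`) (rv n) ` \<tau>" using ne by auto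
    moreover have "\<Union>(revp n \<tau>) = rv n ` S" by (auto simp: revp_def S_def)
    ultimately show "partition_on (\<Union>(revp n \<tau>)) (revp n \<tau>)" by (simp add: revp_def)
    show "\<exists>D\<in>revp n \<sigma>. T' \<subseteq> D" if "T' \<in> revp n \<tau>" for T'
      using that f by (auto simp: revp_def)
    show "T1 = T2" if H: "T1 \<in> revp n \<tau>" "T2 \<in> revp n \<tau>" "D' \<in> revp n \<sigma>" "T1 \<subseteq> D'" "T2 \<subseteq> D'" for T1 T2 D'
    proof -
      obtain U1 U2 D where U: "U1 \<in> \<tau>" "U2 \<in> \<tau>" "D \<in> \<sigma>" "T1 = rv n ` U1" "T2 = rv n ` U2" "D' = rv n ` D"
        using H(1-3) by (auto simp: revp_def)
      have "rv n ` T1 \<subseteq> rv n ` D'" "rv n ` T2 \<subseteq> rv n ` D'" using H(4,5) by auto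
      then have "U1 \<subseteq> D" "U2 \<subseteq> D" using U rv_img_img TN sp_sub[OF s] by auto
      then have "f U1 = f U2" using uniq U by metis
      then have "U1 = U2" using f(2) U by (auto simp: inj_on_def)
      then show ?thesis using U by simp
    qed
  qed
  have "st (revp n \<tau>) = revp (card S) (st \<tau>)" using st_revp[OF fS[unfolded S_def] SN[unfolded S_def]] by (simp add: S_def)
  then have "st (revp n \<tau>) = revp (card (\<Union>\<pi>)) \<pi>" using cU t(2) by simp
  then show ?thesis using sub by (auto simp: contains_def)
qed

lemma avoid_rev_le:
  assumes "card (\<Union>\<pi>') = k" "revp k \<pi>' = \<pi>"
  shows "card (avoiders n \<pi>) \<le> card (avoiders n \<pi>')"
proof -
  have maps: "revp n ` avoiders n \<pi> \<subseteq> avoiders n \<pi>'"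
  proof
    fix \<rho> assume "\<rho> \<in> revp n ` avoiders n \<pi>"
    then obtain \<sigma> where \<sigma>: "\<sigma> \<in> set_partitions n" "\<not> contains \<sigma> \<pi>" "\<rho> = revp n \<sigma>"
      by (auto simp: avoiders_def)
    have r: "\<rho> \<in> set_partitions n" using revp_part[OF \<sigma>(1)] \<sigma>(3) by simp
    have "\<not> contains \<rho> \<pi>'"
    proof
      assume "contains \<rho> \<pi>'"
      then have "contains (revp n \<rho>) (revp (card (\<Union>\<pi>')) \<pi>')" by (rule contains_rev[OF r])
      moreover have "revp n \<rho> = \<sigma>" using \<sigma> revp_revp sp_sub by metis
      moreover note assms(1)
      ultimately show False using \<sigma>(2) assms(2) by simp
    qed
    then show "\<rho> \<in> avoiders n \<pi>'" using r by (simp add: avoiders_def)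
  qed
  have "inj_on (revp n) (avoiders n \<pi>)"
    by (rule inj_onI) (metis (no_types, lifting) revp_revp sp_sub avoiders_def mem_Collect_eq)
  then show ?thesis using maps finite_set_partitions
    by (intro card_inj_on_le) (auto simp: avoiders_def)
qed

lemma filt3: "{y\<in>{1,2,3::nat}. P y} = (if P 1 then {1} else {}) \<union> (if P 2 then {2} else {}) \<union> (if P 3 then {3} else {})"
  by auto

lemma parts3:
  fixes \<pi> :: "nat set set"
  assumes p: "partition_on {1..3} \<pi>"
  shows "\<pi> = {{1},{2},{3}} \<or> \<pi> = {{1,2,3}} \<or> \<pi> = {{1,2},{3}} \<or> \<pi> = {{1},{2,3}} \<or> \<pi> = {{1,3},{2}}"
proof -
  have e3: "{1..3::nat} = {1,2,3}" by auto
  have U: "\<Union>\<pi> = {1,2,3}" using p e3 by (simp add: partition_on_def)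
  have dis: "\<And>A B x. A \<in> \<pi> \<Longrightarrow> B \<in> \<pi> \<Longrightarrow> x \<in> A \<Longrightarrow> x \<in> B \<Longrightarrow> A = B"
    using p by (auto simp: partition_on_def disjoint_def)
  have ne: "{} \<notin> \<pi>" using p by (simp add: partition_on_def)
  define R where "R x y \<longleftrightarrow> (\<exists>B\<in>\<pi>. x \<in> B \<and> y \<in> B)" for x y
  have cls: "B = {y\<in>{1,2,3}. R x y}" if "B \<in> \<pi>" "x \<in> B" for B x
  proof
    show "B \<subseteq> {y\<in>{1,2,3}. R x y}" using that U by (auto simp: R_def)
    show "{y\<in>{1,2,3}. R x y} \<subseteq> B" using that dis by (auto simp: R_def)
  qed
  have pi: "\<pi> = (\<lambda>x. {y\<in>{1,2,3}. R x y}) ` {1,2,3}"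
  proof
    show "\<pi> \<subseteq> (\<lambda>x. {y\<in>{1,2,3}. R x y}) ` {1,2,3}"
    proof
      fix B assume B: "B \<in> \<pi>"
      then obtain x where "x \<in> B" using ne by (metis all_not_in_conv)
      moreover have "x \<in> {1,2,3}" using U B \<open>x \<in> B\<close> by blast
      ultimately show "B \<in> (\<lambda>x. {y\<in>{1,2,3}. R x y}) ` {1,2,3}" using cls[OF B] by blast
    qed
    show "(\<lambda>x. {y\<in>{1,2,3}. R x y}) ` {1,2,3} \<subseteq> \<pi>"
    proof
      fix C assume "C \<in> (\<lambda>x. {y\<in>{1,2,3}. R x y}) ` {1,2,3}"
      then obtain x where x: "x \<in> {1,2,3}" "C = {y\<in>{1,2,3}. R x y}" by blast
      then obtain B where "B \<in> \<pi>" "x \<in> B" using U by (metis UnionE)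
      then show "C \<in> \<pi>" using cls x by metis
    qed
  qed
  have refl: "R x x" if "x \<in> {1,2,3}" for x using that U by (auto simp: R_def)
  have sym: "R x y \<longleftrightarrow> R y x" for x y by (auto simp: R_def)
  have trans: "R x y \<Longrightarrow> R y z \<Longrightarrow> R x z" for x y z using dis by (auto simp: R_def)
  have r: "R 1 1" "R 2 2" "R 3 3" using refl by auto
  have s: "R 2 1 \<longleftrightarrow> R 1 2" "R 3 1 \<longleftrightarrow> R 1 3" "R 3 2 \<longleftrightarrow> R 2 3" using sym by auto
  have c1: "{y\<in>{1,2,3}. R 1 y} = insert 1 ((if R 1 2 then {2} else {}) \<union> (if R 1 3 then {3} else {}))"
    using r by (auto simp: filt3)
  have c2: "{y\<in>{1,2,3}. R 2 y} = insert 2 ((if R 1 2 then {1} else {}) \<union> (if R 2 3 then {3} else {}))"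
    using r s by (auto simp: filt3)
  have c3: "{y\<in>{1,2,3}. R 3 y} = insert 3 ((if R 1 3 then {1} else {}) \<union> (if R 2 3 then {2} else {}))"
    using r s by (auto simp: filt3)
  have pi': "\<pi> = {{y\<in>{1,2,3}. R 1 y}, {y\<in>{1,2,3}. R 2 y}, {y\<in>{1,2,3}. R 3 y}}"
    by (subst pi) simp
  have t1: "R 1 2 \<Longrightarrow> R 2 3 \<Longrightarrow> R 1 3" using trans by blast
  have t2: "R 1 2 \<Longrightarrow> R 1 3 \<Longrightarrow> R 2 3" using trans s by blast
  have t3: "R 1 3 \<Longrightarrow> R 2 3 \<Longrightarrow> R 1 2" using trans s by blast
  show ?thesis
  proof (cases "R 1 2")
    case T12: True
    show ?thesis
    proof (cases "R 1 3")
      case True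
      then have "R 2 3" using t2 T12 by blast
      then have "\<pi> = {{1,2,3}}" unfolding pi' c1 c2 c3 using T12 True by (simp add: insert_commute)
      then show ?thesis by simp
    next
      case False
      then have "\<not> R 2 3" using t1 T12 by blast
      then have "\<pi> = {{1,2},{3}}" unfolding pi' c1 c2 c3 using T12 False by (simp add: insert_commute)
      then show ?thesis by simp
    qed
  next
    case F12: False
    show ?thesis
    proof (cases "R 1 3")
      case True
      then have "\<not> R 2 3" using t3 F12 by blast
      then have "\<pi> = {{1,3},{2}}" unfolding pi' c1 c2 c3 using F12 True by (simp add: insert_commute)
      then show ?thesis by simp
    next
      case F13: False
      show ?thesis
      proof (cases "R 2 3")
        case True
        then have "\<pi> = {{1},{2,3}}" unfolding pi' c1 c2 c3 using F12 F13 True by (simp add: insert_commute)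
        then show ?thesis by simp
      next
        case False
        then have "\<pi> = {{1},{2},{3}}" unfolding pi' c1 c2 c3 using F12 F13 False by (simp add: insert_commute)
        then show ?thesis by simp
      qed
    qed
  qed
qed

lemma pair3: "pair_singletons_part 3 = {{1,2},{3}}"
  by (simp add: pair_singletons_part_def)

lemma rev_pair3: "revp 3 {{1,2},{3}} = {{1},{2,3}}"
  by (simp add: revp_def rv_def insert_commute)

lemma rev_123: "revp 3 {{1},{2,3}} = {{1,2},{3}}"
  by (simp add: revp_def rv_def insert_commute)

lemma card_avoid_123: "card (avoiders n {{1},{2,3}}) = card (avoiders n (pair_singletons_part 3))"
proof (rule antisym)
  have "card (\<Union>{{1,2},{3::nat}}) = 3" by simp
  then show "card (avoiders n {{1},{2,3}}) \<le> card (avoiders n (pair_singletons_part 3))"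
    unfolding pair3 using rev_pair3 by (rule avoid_rev_le)
  have "card (\<Union>{{1},{2,3::nat}}) = 3" by simp
  then show "card (avoiders n (pair_singletons_part 3)) \<le> card (avoiders n {{1},{2,3}})"
    unfolding pair3 using rev_123 by (rule avoid_rev_le)
qed

theorem theorem3p7:
  shows "(\<forall>m\<ge>1. P_recursive (\<lambda>n. real (card (avoiders n (singletons_part m))))
                 \<and> P_recursive (\<lambda>n. real (card (avoiders n (oneblock_part m)))))
       \<and> (\<forall>m\<ge>2. P_recursive (\<lambda>n. real (card (avoiders n (pair_singletons_part m)))))
       \<and> (\<forall>\<pi>. partition_on {1..3} \<pi> \<longrightarrow> P_recursive (\<lambda>n. real (card (avoiders n \<pi>))))"
proof (intro conjI allI impI)
  fix m :: nat assume "m \<ge> 1"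
  then show "P_recursive (\<lambda>n. real (card (avoiders n (singletons_part m))))"
    "P_recursive (\<lambda>n. real (card (avoiders n (oneblock_part m))))"
    using singletons_Prec oneblock_Prec by auto
next
  fix m :: nat assume "m \<ge> 2"
  then show "P_recursive (\<lambda>n. real (card (avoiders n (pair_singletons_part m))))"
    by (rule pair_Prec)
next
  fix \<pi> :: "nat set set" assume p: "partition_on {1..3} \<pi>"
  have e3: "{1..3::nat} = {1,2,3}" by auto
  have s3: "singletons_part 3 = {{1},{2},{3}}" unfolding singletons_part_def e3 by simp
  have o3: "oneblock_part 3 = {{1,2,3}}" unfolding oneblock_part_def e3 by simp
  have r123: "(\<lambda>n. real (card (avoiders n {{1},{2,3}}))) = (\<lambda>n. real (card (avoiders n (pair_singletons_part 3))))"
    by (rule ext, simp only: card_avoid_123)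
  from parts3[OF p] show "P_recursive (\<lambda>n. real (card (avoiders n \<pi>)))"
  proof (elim disjE)
    assume "\<pi> = {{1},{2},{3}}"
    then show ?thesis using singletons_Prec[of 3] s3 by simp
  next
    assume "\<pi> = {{1,2,3}}"
    then show ?thesis using oneblock_Prec[of 3] o3 by simp
  next
    assume "\<pi> = {{1,2},{3}}"
    then show ?thesis using pair_Prec[of 3] pair3 by simp
  next
    assume "\<pi> = {{1},{2,3}}"
    then show ?thesis using pair_Prec[of 3] r123 by simp
  next
    assume "\<pi> = {{1,3},{2}}"
    then show ?thesis using Prec_132 by simp
  qed
qed

end
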